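(* Let $\Gamma$ be a coordination population network game whose graph consists of a single star or of several disconnected stars, and let $\beta>0$, $\lambda\ge0$. Then (a) every orbit of the belief dynamics of homogeneous systems, $$\frac{d\mu_{is}}{dt}=\frac{f_{i,s}(\{\boldsymbol{\mu}_j\}_{j\in V_i})-\mu_{is}}{\lambda+t+1},\qquad i\in V,\ s\in S_i,$$ starting in $\prod_{i\in V}\Delta_i$, converges to the set of QRE of $\Gamma$; and (b) for any initial variances $\sigma^2_{js}\ge0$, every orbit of the mean belief dynamics of initially heterogeneous systems, $$\frac{d\bar{\mu}_{is}}{dt}=\frac{f_{i,s}(\bar{\boldsymbol{\mu}})-\bar{\mu}_{is}}{\lambda+t+1}+\frac{\sum_{j\in V_i}\sum_{s'\in S_j}\frac{\partial^2 f_{i,s}}{\partial\mu_{js'}^2}(\bar{\boldsymbol{\mu}})\,\big(\tfrac{\lambda+1}{\lambda+t+1}\big)^2\sigma^2_{js'}}{2(\lambda+t+1)},$$ starting from $\bar{\boldsymbol{\mu}}(0)\in\prod_{i\in V}\Delta_i$, converges to the set of QRE of $\Gamma$ (convergence to a set meaning that the distance from the orbit to that set tends to $0$ as $t\to\infty$).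
   Context: A population network game $\Gamma$ consists of a finite undirected graph with vertex set $V=\{1,\dots,n\}$ (populations) and edge set $E$; $V_i=\{j:\{i,j\}\in E\}$. Population $i$ has finite strategy set $S_i$, $\Delta_i\subset\mathbb{R}^{|S_i|}$ is the probability simplex, and each edge $\{i,j\}$ carries payoff matrices $\mathbf{A}_{ij}\in\mathbb{R}^{|S_i|\times|S_j|}$, $\mathbf{A}_{ji}\in\mathbb{R}^{|S_j|\times|S_i|}$. $\Gamma$ is a coordination game if $\mathbf{A}_{ij}=\mathbf{A}_{ji}^\top$ for every edge. The graph consists of a single or disconnected multiple stars if each connected component has a root vertex adjacent to all other vertices of the component and no other edges. The logit choice function is $f_{i,s}(\{\boldsymbol{\mu}_j\}_{j\in V_i})=\exp\big(\beta\sum_{j\in V_i}\mathbf{e}_s^\top\mathbf{A}_{ij}\boldsymbol{\mu}_j\big)/\sum_{s'\in S_i}\exp\big(\beta\sum_{j\in V_i}\mathbf{e}_{s'}^\top\mathbf{A}_{ij}\boldsymbol{\mu}_j\big)$ ($\mathbf{e}_s$ the $s$-th unit vector), viewed as a smooth function on $\prod_{j\in V_i}\mathbb{R}^{|S_j|}$; $f_{i,s}(\bar{\boldsymbol{\mu}})=f_{i,s}(\{\bar{\boldsymbol{\mu}}_j\}_{j\in V_i})$. A QRE is $\mathbf{x}^\ast\in\prod_i\Delta_i$ with $x^\ast_{is}=f_{i,s}(\{\mathbf{x}^\ast_j\}_{j\in V_i})$ for all $i,s$. In an initially heterogeneous system, $\bar{\boldsymbol{\mu}}_j$ is the mean belief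 about population $j$ across the system and $\sigma^2_{js'}$ is the initial variance of the belief component $\mu_{js'}$. *)

theory Defs
  imports "HOL-Analysis.Analysis"
begin

text \<open>Populations are 0..<n; population i has strategies 0..<m i.
  E is the (undirected) edge relation, A i j s s' the entry (s,s') of the
  payoff matrix A_ij. A (joint) belief/state is a function
  x :: nat \<Rightarrow> nat \<Rightarrow> real, x i s = component s of the vector for population i;
  only coordinates i<n, s<m i are meaningful.\<close>

type_synonym state = "nat \<Rightarrow> nat \<Rightarrow> real"

definition simple_graph :: "nat \<Rightarrow> (nat \<Rightarrow> nat \<Rightarrow> bool) \<Rightarrow> bool" where
  "simple_graph n E \<longleftrightarrow> (\<forall>i j. E i j \<longrightarrow> i < n \<and> j < n) \<and>
     (\<forall>i j. E i j \<longrightarrow> E j i) \<and> (\<forall>i. \<not> E i i)"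

definition nbrs :: "nat \<Rightarrow> (nat \<Rightarrow> nat \<Rightarrow> bool) \<Rightarrow> nat \<Rightarrow> nat set" where
  "nbrs n E i = {j. j < n \<and> E i j}"

definition reach :: "nat \<Rightarrow> (nat \<Rightarrow> nat \<Rightarrow> bool) \<Rightarrow> nat \<Rightarrow> nat \<Rightarrow> bool" where
  "reach n E = (\<lambda>a b. a < n \<and> b < n \<and> E a b)\<^sup>*\<^sup>*"

definition star_forest :: "nat \<Rightarrow> (nat \<Rightarrow> nat \<Rightarrow> bool) \<Rightarrow> bool" where
  "star_forest n E \<longleftrightarrow> (\<forall>v<n. \<exists>r. reach n E v r \<and>
      (\<forall>u. reach n E v u \<longrightarrow> u \<noteq> r \<longrightarrow> E r u) \<and>
      (\<forall>u w. reach n E v u \<longrightarrow> reach n E v w \<longrightarrow> E u w \<longrightarrow> u = r \<or> w = r))"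

definition coordination :: "nat \<Rightarrow> (nat \<Rightarrow> nat) \<Rightarrow> (nat \<Rightarrow> nat \<Rightarrow> bool)
    \<Rightarrow> (nat \<Rightarrow> nat \<Rightarrow> nat \<Rightarrow> nat \<Rightarrow> real) \<Rightarrow> bool" where
  "coordination n m E A \<longleftrightarrow> (\<forall>i j s s'. E i j \<longrightarrow> s < m i \<longrightarrow> s' < m j \<longrightarrow> A i j s s' = A j i s' s)"

definition payoff :: "nat \<Rightarrow> (nat \<Rightarrow> nat) \<Rightarrow> (nat \<Rightarrow> nat \<Rightarrow> bool)
    \<Rightarrow> (nat \<Rightarrow> nat \<Rightarrow> nat \<Rightarrow> nat \<Rightarrow> real) \<Rightarrow> nat \<Rightarrow> nat \<Rightarrow> state \<Rightarrow> real" where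
  "payoff n m E A i s mu = (\<Sum>j\<in>nbrs n E i. \<Sum>s'<m j. A i j s s' * mu j s')"

text \<open>Logit choice function f_{i,s}, as a function on all of the (unconstrained) state space.\<close>
definition logit :: "nat \<Rightarrow> (nat \<Rightarrow> nat) \<Rightarrow> (nat \<Rightarrow> nat \<Rightarrow> bool)
    \<Rightarrow> (nat \<Rightarrow> nat \<Rightarrow> nat \<Rightarrow> nat \<Rightarrow> real) \<Rightarrow> real \<Rightarrow> nat \<Rightarrow> nat \<Rightarrow> state \<Rightarrow> real" where
  "logit n m E A beta i s mu =
     exp (beta * payoff n m E A i s mu) / (\<Sum>t<m i. exp (beta * payoff n m E A i t mu))"

definition second_partial :: "(state \<Rightarrow> real) \<Rightarrow> nat \<Rightarrow> nat \<Rightarrow> state \<Rightarrow> real" where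
  "second_partial F j s' mu =
     deriv (\<lambda>h. deriv (\<lambda>k. F (mu(j := (mu j)(s' := k)))) h) (mu j s')"

definition prod_simplex :: "nat \<Rightarrow> (nat \<Rightarrow> nat) \<Rightarrow> state set" where
  "prod_simplex n m = {x. \<forall>i<n. (\<forall>s<m i. 0 \<le> x i s) \<and> (\<Sum>s<m i. x i s) = 1}"

definition QRE :: "nat \<Rightarrow> (nat \<Rightarrow> nat) \<Rightarrow> (nat \<Rightarrow> nat \<Rightarrow> bool)
    \<Rightarrow> (nat \<Rightarrow> nat \<Rightarrow> nat \<Rightarrow> nat \<Rightarrow> real) \<Rightarrow> real \<Rightarrow> state set" where
  "QRE n m E A beta = {x \<in> prod_simplex n m. \<forall>i<n. \<forall>s<m i. x i s = logit n m E A beta i s x}"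

definition sdist :: "nat \<Rightarrow> (nat \<Rightarrow> nat) \<Rightarrow> state \<Rightarrow> state \<Rightarrow> real" where
  "sdist n m x y = sqrt (\<Sum>i<n. \<Sum>s<m i. (x i s - y i s)\<^sup>2)"

definition sinfdist :: "nat \<Rightarrow> (nat \<Rightarrow> nat) \<Rightarrow> state \<Rightarrow> state set \<Rightarrow> real" where
  "sinfdist n m x Q = (INF q\<in>Q. sdist n m x q)"

definition homog_orbit :: "nat \<Rightarrow> (nat \<Rightarrow> nat) \<Rightarrow> (nat \<Rightarrow> nat \<Rightarrow> bool)
    \<Rightarrow> (nat \<Rightarrow> nat \<Rightarrow> nat \<Rightarrow> nat \<Rightarrow> real) \<Rightarrow> real \<Rightarrow> real \<Rightarrow> (real \<Rightarrow> state) \<Rightarrow> bool" where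
  "homog_orbit n m E A beta lam mu \<longleftrightarrow>
     (\<forall>t\<ge>0. \<forall>i<n. \<forall>s<m i.
        ((\<lambda>\<tau>. mu \<tau> i s) has_real_derivative
           (logit n m E A beta i s (mu t) - mu t i s) / (lam + t + 1)) (at t within {0..}))"

definition hetero_orbit :: "nat \<Rightarrow> (nat \<Rightarrow> nat) \<Rightarrow> (nat \<Rightarrow> nat \<Rightarrow> bool)
    \<Rightarrow> (nat \<Rightarrow> nat \<Rightarrow> nat \<Rightarrow> nat \<Rightarrow> real) \<Rightarrow> real \<Rightarrow> real \<Rightarrow> state \<Rightarrow> (real \<Rightarrow> state) \<Rightarrow> bool" where
  "hetero_orbit n m E A beta lam sigma2 mu \<longleftrightarrow>
     (\<forall>t\<ge>0. \<forall>i<n. \<forall>s<m i.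
        ((\<lambda>\<tau>. mu \<tau> i s) has_real_derivative
           (logit n m E A beta i s (mu t) - mu t i s) / (lam + t + 1)
           + (\<Sum>j\<in>nbrs n E i. \<Sum>s'<m j.
                second_partial (logit n m E A beta i s) j s' (mu t)
                * ((lam + 1) / (lam + t + 1))\<^sup>2 * sigma2 j s')
             / (2 * (lam + t + 1))) (at t within {0..}))"

end

theory Submission
  imports Defs
begin



lemma mono_deriv:
  fixes g g' :: "real \<Rightarrow> real"
  assumes d: "\<And>t. a \<le> t \<Longrightarrow> t \<le> b \<Longrightarrow> (g has_real_derivative g' t) (at t within {a..})"
    and nn: "\<And>t. a \<le> t \<Longrightarrow> t \<le> b \<Longrightarrow> 0 \<le> g' t"
    and ab: "a \<le> b"
  shows "g a \<le> g b"
proof (rule DERIV_nonneg_imp_increasing_open[OF ab])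
  fix x assume x: "a < x" "x < b"
  have "at x within {a..} = at x"
    by (rule at_within_interior) (use x in auto)
  then show "\<exists>y. DERIV g x :> y \<and> 0 \<le> y" using d[of x] nn[of x] x by auto
next
  show "continuous_on {a..b} g"
    unfolding continuous_on_eq_continuous_within
  proof
    fix x assume x: "x \<in> {a..b}"
    have "continuous (at x within {a..}) g"
      using d[of x] x by (auto intro: DERIV_continuous)
    then show "continuous (at x within {a..b}) g"
      by (rule continuous_within_subset) auto
  qed
qed


definition lP :: "nat \<Rightarrow> real \<Rightarrow> (nat \<Rightarrow> real) \<Rightarrow> (nat \<Rightarrow> real) \<Rightarrow> nat \<Rightarrow> real \<Rightarrow> real" where
  "lP M b c a t k = exp (b * (c t + a t * k)) / (\<Sum>r<M. exp (b * (c r + a r * k)))"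

definition lab :: "nat \<Rightarrow> real \<Rightarrow> (nat \<Rightarrow> real) \<Rightarrow> (nat \<Rightarrow> real) \<Rightarrow> real \<Rightarrow> real" where
  "lab M b c a k = (\<Sum>r<M. a r * lP M b c a r k)"

lemma lP_deriv:
  assumes M: "0 < M"
  shows "(lP M b c a s has_real_derivative b * lP M b c a s k * (a s - lab M b c a k)) (at k)"
proof -
  let ?w = "\<lambda>t k. exp (b * (c t + a t * k))"
  let ?Z = "\<lambda>k. \<Sum>r<M. ?w r k"
  have Zpos: "?Z k > 0" using M by (intro sum_pos) auto
  have dw: "\<And>t. (?w t has_real_derivative ?w t k * (b * a t)) (at k)"
    by (auto intro!: derivative_eq_intros)
  have dZ: "(?Z has_real_derivative (\<Sum>r<M. ?w r k * (b * a r))) (at k)"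
    by (rule DERIV_sum) (rule dw)
  have "((\<lambda>k. ?w s k / ?Z k) has_real_derivative
      (?w s k * (b * a s) * ?Z k - ?w s k * (\<Sum>r<M. ?w r k * (b * a r))) / (?Z k * ?Z k)) (at k)"
    by (rule DERIV_divide[OF dw dZ]) (use Zpos in auto)
  moreover have "(?w s k * (b * a s) * ?Z k - ?w s k * (\<Sum>r<M. ?w r k * (b * a r))) / (?Z k * ?Z k)
      = b * lP M b c a s k * (a s - lab M b c a k)"
  proof -
    have "lab M b c a k = (\<Sum>r<M. ?w r k * a r) / ?Z k"
      unfolding lab_def lP_def by (simp add: sum_divide_distrib mult.commute)
    moreover have "(\<Sum>r<M. ?w r k * (b * a r)) = b * (\<Sum>r<M. ?w r k * a r)"
      by (simp add: sum_distrib_left mult_ac)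
    ultimately show ?thesis using Zpos unfolding lP_def
      by (simp add: field_simps)
  qed
  ultimately show ?thesis unfolding lP_def[abs_def] by simp
qed

lemma lP_sum: "0 < M \<Longrightarrow> (\<Sum>t<M. lP M b c a t k) = 1"
proof -
  assume M: "0 < M"
  have Zpos: "(\<Sum>r<M. exp (b * (c r + a r * k))) > 0" using M by (intro sum_pos) auto
  show ?thesis unfolding lP_def using Zpos by (simp add: sum_divide_distrib[symmetric])
qed

lemma lP_pos: "0 < M \<Longrightarrow> 0 < lP M b c a t k"
proof -
  assume M: "0 < M"
  have Zpos: "(\<Sum>r<M. exp (b * (c r + a r * k))) > 0" using M by (intro sum_pos) auto
  show ?thesis unfolding lP_def using Zpos by simp
qed

lemma lab_deriv:
  assumes M: "0 < M"
  shows "(lab M b c a has_real_derivative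
     (\<Sum>r<M. a r * (b * lP M b c a r k * (a r - lab M b c a k)))) (at k)"
proof -
  have "((\<lambda>k. \<Sum>r<M. a r * lP M b c a r k) has_real_derivative
     (\<Sum>r<M. a r * (b * lP M b c a r k * (a r - lab M b c a k)))) (at k)"
    by (rule DERIV_sum) (intro DERIV_cmult lP_deriv[OF M])
  then show ?thesis by (simp add: lab_def[abs_def])
qed

definition lP2 :: "nat \<Rightarrow> real \<Rightarrow> (nat \<Rightarrow> real) \<Rightarrow> (nat \<Rightarrow> real) \<Rightarrow> nat \<Rightarrow> real \<Rightarrow> real" where
  "lP2 M b c a s k = b\<^sup>2 * lP M b c a s k * ((a s - lab M b c a k)\<^sup>2
      - (\<Sum>r<M. a r * lP M b c a r k * (a r - lab M b c a k)))"

lemma lP1_deriv: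
  assumes M: "0 < M"
  shows "((\<lambda>k. b * lP M b c a s k * (a s - lab M b c a k)) has_real_derivative lP2 M b c a s k) (at k)"
proof -
  have "((\<lambda>k. b * lP M b c a s k * (a s - lab M b c a k)) has_real_derivative
     b * (b * lP M b c a s k * (a s - lab M b c a k)) * (a s - lab M b c a k)
     + (0 - (\<Sum>r<M. a r * (b * lP M b c a r k * (a r - lab M b c a k)))) * (b * lP M b c a s k)) (at k)"
    by (rule DERIV_mult[OF DERIV_cmult[OF lP_deriv[OF M]] DERIV_diff[OF DERIV_const lab_deriv[OF M]]])
  moreover have "b * (b * lP M b c a s k * (a s - lab M b c a k)) * (a s - lab M b c a k)
     + (0 - (\<Sum>r<M. a r * (b * lP M b c a r k * (a r - lab M b c a k)))) * (b * lP M b c a s k)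
     = lP2 M b c a s k"
    unfolding lP2_def
    by (simp add: sum_distrib_left power2_eq_square algebra_simps)
  ultimately show ?thesis by simp
qed

lemma deriv_deriv_lP:
  assumes M: "0 < M"
  shows "deriv (\<lambda>h. deriv (lP M b c a s) h) k = lP2 M b c a s k"
proof -
  have "deriv (lP M b c a s) = (\<lambda>k. b * lP M b c a s k * (a s - lab M b c a k))"
    by (rule ext, rule DERIV_imp_deriv, rule lP_deriv[OF M])
  then show ?thesis using DERIV_imp_deriv[OF lP1_deriv[OF M]] by simp
qed

lemma lP2_sum:
  assumes M: "0 < M"
  shows "(\<Sum>s<M. lP2 M b c a s k) = 0"
proof -
  let ?p = "\<lambda>r. lP M b c a r k" and ?ab = "lab M b c a k"
  have p1: "(\<Sum>r<M. ?p r) = 1" by (rule lP_sum[OF M])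
  have ab: "?ab = (\<Sum>r<M. a r * ?p r)" by (simp add: lab_def)
  let ?X = "\<Sum>r<M. a r * ?p r * (a r - ?ab)"
  have "(\<Sum>s<M. lP2 M b c a s k) = b\<^sup>2 * (\<Sum>s<M. ?p s * ((a s - ?ab)\<^sup>2 - ?X))"
    by (simp add: lP2_def sum_distrib_left mult.assoc)
  also have "(\<Sum>s<M. ?p s * ((a s - ?ab)\<^sup>2 - ?X)) = (\<Sum>s<M. ?p s * (a s - ?ab)\<^sup>2) - (\<Sum>s<M. ?p s) * ?X"
    by (simp add: right_diff_distrib sum_subtractf sum_distrib_right)
  also have "\<dots> = (\<Sum>s<M. ?p s * (a s - ?ab)\<^sup>2 - a s * ?p s * (a s - ?ab))"
    using p1 by (simp add: sum_subtractf)
  also have "\<dots> = (\<Sum>s<M. ?ab * ?ab * ?p s - ?ab * (?p s * a s))"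
    by (rule sum.cong) (simp_all add: power2_eq_square algebra_simps)
  also have "\<dots> = - ?ab * (\<Sum>s<M. ?p s * a s) + ?ab * ?ab * (\<Sum>s<M. ?p s)"
    by (simp add: sum_subtractf sum_distrib_left sum_negf)
  also have "(\<Sum>s<M. ?p s * a s) = ?ab" using ab by (simp add: mult.commute)
  also have "- ?ab * ?ab + ?ab * ?ab * (\<Sum>s<M. ?p s) = 0" using p1 by simp
  finally show ?thesis by simp
qed

lemma lP2_bound:
  assumes M: "0 < M" and s: "s < M" and aM: "\<And>r. r < M \<Longrightarrow> \<bar>a r\<bar> \<le> K"
  shows "\<bar>lP2 M b c a s k\<bar> \<le> 6 * b\<^sup>2 * K\<^sup>2"
proof -
  let ?p = "\<lambda>r. lP M b c a r k" and ?ab = "lab M b c a k"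
  have p1: "(\<Sum>r<M. ?p r) = 1" by (rule lP_sum[OF M])
  have pp: "\<And>r. 0 < ?p r" by (rule lP_pos[OF M])
  have ple: "?p s \<le> 1" using p1 s pp
    by (metis finite_lessThan lessThan_iff member_le_sum less_imp_le)
  have K0: "0 \<le> K" using aM[OF M] by auto
  have abK: "\<bar>?ab\<bar> \<le> K"
  proof -
    have "\<bar>?ab\<bar> \<le> (\<Sum>r<M. \<bar>a r * ?p r\<bar>)" unfolding lab_def by (rule sum_abs)
    also have "\<dots> \<le> (\<Sum>r<M. K * ?p r)"
    proof (rule sum_mono)
      fix r assume r: "r \<in> {..<M}"
      have "\<bar>a r\<bar> * ?p r \<le> K * ?p r" using aM[of r] r pp[of r] by (intro mult_right_mono) auto
      then show "\<bar>a r * ?p r\<bar> \<le> K * ?p r" using pp[of r] by (simp add: abs_mult)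
    qed
    also have "\<dots> = K" using p1 by (simp add: sum_distrib_left[symmetric])
    finally show ?thesis .
  qed
  have t1: "\<bar>a s - ?ab\<bar> \<le> 2 * K" using aM[OF s] abK by linarith
  have t1': "(a s - ?ab)\<^sup>2 \<le> 4 * K\<^sup>2"
  proof -
    have "(a s - ?ab)\<^sup>2 = \<bar>a s - ?ab\<bar>\<^sup>2" by simp
    also have "\<dots> \<le> (2*K)\<^sup>2" by (rule power_mono[OF t1]) simp
    finally show ?thesis by (simp add: power_mult_distrib)
  qed
  have t2: "\<bar>\<Sum>r<M. a r * ?p r * (a r - ?ab)\<bar> \<le> 2 * K\<^sup>2"
  proof -
    have "\<bar>\<Sum>r<M. a r * ?p r * (a r - ?ab)\<bar> \<le> (\<Sum>r<M. \<bar>a r * ?p r * (a r - ?ab)\<bar>)" by (rule sum_abs)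
    also have "\<dots> \<le> (\<Sum>r<M. 2 * K\<^sup>2 * ?p r)"
    proof (rule sum_mono)
      fix r assume r: "r \<in> {..<M}"
      have "\<bar>a r\<bar> * \<bar>a r - ?ab\<bar> \<le> K * (2 * K)"
        using aM[of r] r abK K0 by (intro mult_mono) auto
      then show "\<bar>a r * ?p r * (a r - ?ab)\<bar> \<le> 2 * K\<^sup>2 * ?p r"
        using pp[of r] by (simp add: abs_mult power2_eq_square mult_ac)
    qed
    also have "\<dots> = 2 * K\<^sup>2" using p1 by (simp add: sum_distrib_left[symmetric])
    finally show ?thesis .
  qed
  have "\<bar>(a s - ?ab)\<^sup>2 - (\<Sum>r<M. a r * ?p r * (a r - ?ab))\<bar> \<le> 6 * K\<^sup>2"
  proof -
    have z: "0 \<le> (a s - ?ab)\<^sup>2" by simp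
    have "(\<Sum>r<M. a r * ?p r * (a r - ?ab)) \<le> 2 * K\<^sup>2" "- (\<Sum>r<M. a r * ?p r * (a r - ?ab)) \<le> 2 * K\<^sup>2"
      using t2 by (simp_all add: abs_le_iff)
    then show ?thesis using t1' z by (intro abs_leI) linarith+
  qed
  then have "?p s * \<bar>(a s - ?ab)\<^sup>2 - (\<Sum>r<M. a r * ?p r * (a r - ?ab))\<bar> \<le> 1 * (6 * K\<^sup>2)"
    using ple pp[of s] by (intro mult_mono) auto
  then have "b\<^sup>2 * (?p s * \<bar>(a s - ?ab)\<^sup>2 - (\<Sum>r<M. a r * ?p r * (a r - ?ab))\<bar>) \<le> b\<^sup>2 * (6 * K\<^sup>2)"
    by (intro mult_left_mono) auto
  moreover have "\<bar>lP2 M b c a s k\<bar> = b\<^sup>2 * (?p s * \<bar>(a s - ?ab)\<^sup>2 - (\<Sum>r<M. a r * ?p r * (a r - ?ab))\<bar>)"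
    unfolding lP2_def using pp[of s] by (simp add: abs_mult)
  ultimately show ?thesis by simp
qed

lemma finite_nbrs[simp]: "finite (nbrs n E i)"
  unfolding nbrs_def by auto

lemma payoff_line:
  "payoff n m E A i t (x(j := (x j)(s' := k))) =
     (payoff n m E A i t x - (if j \<in> nbrs n E i \<and> s' < m j then A i j t s' else 0) * x j s')
     + (if j \<in> nbrs n E i \<and> s' < m j then A i j t s' else 0) * k"
proof -
  let ?d = "k - x j s'"
  have y: "\<And>j' s''. (x(j := (x j)(s' := k))) j' s'' = x j' s'' + (if j' = j \<and> s'' = s' then ?d else 0)"
    by auto
  have inner: "\<And>j'. (\<Sum>s''<m j'. A i j' t s'' * (if j' = j \<and> s'' = s' then ?d else 0))
      = (if j' = j \<and> s' < m j then A i j t s' * ?d else 0)"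
  proof -
    fix j'
    show "(\<Sum>s''<m j'. A i j' t s'' * (if j' = j \<and> s'' = s' then ?d else 0))
      = (if j' = j \<and> s' < m j then A i j t s' * ?d else 0)"
    proof (cases "j' = j")
      case True
      then show ?thesis
        by (simp add: if_distrib[where f="\<lambda>z. A i j t _ * z"] sum.delta' cong: if_cong)
    qed simp
  qed
  have "payoff n m E A i t (x(j := (x j)(s' := k))) =
      payoff n m E A i t x + (\<Sum>j'\<in>nbrs n E i. (if j' = j \<and> s' < m j then A i j t s' * ?d else 0))"
    unfolding payoff_def y by (simp add: distrib_left sum.distrib inner)
  also have "(\<Sum>j'\<in>nbrs n E i. (if j' = j \<and> s' < m j then A i j t s' * ?d else 0))
     = (if j \<in> nbrs n E i \<and> s' < m j then A i j t s' * ?d else 0)"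
    by (cases "s' < m j") (simp_all add: sum.delta')
  finally have eq: "payoff n m E A i t (x(j := (x j)(s' := k))) =
      payoff n m E A i t x + (if j \<in> nbrs n E i \<and> s' < m j then A i j t s' * ?d else 0)" .
  show ?thesis
  proof (cases "j \<in> nbrs n E i \<and> s' < m j")
    case True
    show ?thesis by (simp only: eq if_P[OF True]; simp add: algebra_simps)
  next
    case False
    show ?thesis by (simp only: eq if_not_P[OF False]; simp)
  qed
qed

lemma logit_line:
  "logit n m E A beta i s (x(j := (x j)(s' := k))) =
    lP (m i) beta (\<lambda>t. payoff n m E A i t x - (if j \<in> nbrs n E i \<and> s' < m j then A i j t s' else 0) * x j s')
      (\<lambda>t. if j \<in> nbrs n E i \<and> s' < m j then A i j t s' else 0) s k"
  unfolding logit_def lP_def payoff_line by simp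

lemma lP_at: "lP (m i) beta (\<lambda>t. payoff n m E A i t x - (a t) * x j s') a s (x j s')
   = logit n m E A beta i s x"
  unfolding logit_def lP_def by simp



locale game =
  fixes n :: nat and m :: "nat \<Rightarrow> nat" and E :: "nat \<Rightarrow> nat \<Rightarrow> bool"
    and A :: "nat \<Rightarrow> nat \<Rightarrow> nat \<Rightarrow> nat \<Rightarrow> real" and beta lam :: real
  assumes sg: "simple_graph n E"
    and mpos: "\<forall>i<n. 0 < m i"
    and coord: "coordination n m E A"
    and bpos: "beta > 0" and lam0: "lam \<ge> 0"
    and npos: "0 < n"
begin

definition MA where
  "MA = (\<Sum>i<n. \<Sum>s<m i. \<Sum>j<n. \<Sum>s'<m j. \<bar>A i j s s'\<bar>)"

definition Mm where "Mm = (\<Sum>i<n. real (m i))"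

definition bil :: "state \<Rightarrow> state \<Rightarrow> real" where
  "bil x y = (\<Sum>i<n. \<Sum>s<m i. x i s * payoff n m E A i s y)"

lemma nbrs_lt: "j \<in> nbrs n E i \<Longrightarrow> j < n"
  unfolding nbrs_def by auto

lemma MA_nonneg: "0 \<le> MA"
  unfolding MA_def by (intro sum_nonneg) auto

lemma A_le_MA:
  assumes "i < n" "s < m i" "j < n" "s' < m j"
  shows "\<bar>A i j s s'\<bar> \<le> MA"
proof -
  have "\<bar>A i j s s'\<bar> \<le> (\<Sum>s'<m j. \<bar>A i j s s'\<bar>)"
    using assms by (intro member_le_sum) auto
  also have "\<dots> \<le> (\<Sum>j<n. \<Sum>s'<m j. \<bar>A i j s s'\<bar>)"
    using assms by (intro member_le_sum[where i=j and f="\<lambda>j. \<Sum>s'<m j. \<bar>A i j s s'\<bar>"]) (auto intro: sum_nonneg)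
  also have "\<dots> \<le> (\<Sum>s<m i. \<Sum>j<n. \<Sum>s'<m j. \<bar>A i j s s'\<bar>)"
    using assms by (intro member_le_sum[where i=s and f="\<lambda>s. \<Sum>j<n. \<Sum>s'<m j. \<bar>A i j s s'\<bar>"]) (auto intro: sum_nonneg)
  also have "\<dots> \<le> MA"
    unfolding MA_def
    using assms by (intro member_le_sum[where i=i and f="\<lambda>i. \<Sum>s<m i. \<Sum>j<n. \<Sum>s'<m j. \<bar>A i j s s'\<bar>"]) (auto intro: sum_nonneg)
  finally show ?thesis .
qed

lemma Mm_ge1: "1 \<le> Mm"
proof -
  have "real (m 0) \<le> Mm" unfolding Mm_def using npos by (intro member_le_sum) auto
  moreover have "1 \<le> real (m 0)" using mpos npos by auto
  ultimately show ?thesis by simp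
qed

lemma m_le_Mm: "i < n \<Longrightarrow> real (m i) \<le> Mm"
  unfolding Mm_def by (intro member_le_sum) auto

lemma denom_pos: "i < n \<Longrightarrow> 0 < (\<Sum>t<m i. exp (beta * payoff n m E A i t x))"
  using mpos by (intro sum_pos) auto

lemma logit_pos: "i < n \<Longrightarrow> 0 < logit n m E A beta i s x"
  unfolding logit_def using denom_pos by simp

lemma logit_sum: "i < n \<Longrightarrow> (\<Sum>s<m i. logit n m E A beta i s x) = 1"
  unfolding logit_def using denom_pos[of i x] by (simp add: sum_divide_distrib[symmetric])

lemma logit_le1: "i < n \<Longrightarrow> s < m i \<Longrightarrow> logit n m E A beta i s x \<le> 1"
proof -
  assume "i < n" "s < m i"
  then have "logit n m E A beta i s x \<le> (\<Sum>s<m i. logit n m E A beta i s x)"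
    by (intro member_le_sum) (auto intro: less_imp_le logit_pos)
  then show ?thesis using logit_sum \<open>i < n\<close> by simp
qed

lemma payoff_bound:
  assumes i: "i < n" "s < m i" and B: "\<And>j s'. j < n \<Longrightarrow> s' < m j \<Longrightarrow> \<bar>x j s'\<bar> \<le> B"
  shows "\<bar>payoff n m E A i s x\<bar> \<le> MA * B"
proof -
  have B0: "0 \<le> B" using B[of 0 0] npos mpos by force
  have "\<bar>payoff n m E A i s x\<bar> \<le> (\<Sum>j\<in>nbrs n E i. \<bar>\<Sum>s'<m j. A i j s s' * x j s'\<bar>)"
    unfolding payoff_def by (rule sum_abs)
  also have "\<dots> \<le> (\<Sum>j\<in>nbrs n E i. \<Sum>s'<m j. \<bar>A i j s s'\<bar> * B)"
  proof (intro sum_mono)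
    fix j assume j: "j \<in> nbrs n E i"
    have "\<bar>\<Sum>s'<m j. A i j s s' * x j s'\<bar> \<le> (\<Sum>s'<m j. \<bar>A i j s s' * x j s'\<bar>)" by (rule sum_abs)
    also have "\<dots> \<le> (\<Sum>s'<m j. \<bar>A i j s s'\<bar> * B)"
      using B nbrs_lt[OF j] by (intro sum_mono) (auto simp: abs_mult intro: mult_left_mono)
    finally show "\<bar>\<Sum>s'<m j. A i j s s' * x j s'\<bar> \<le> (\<Sum>s'<m j. \<bar>A i j s s'\<bar> * B)" .
  qed
  also have "\<dots> \<le> (\<Sum>j<n. \<Sum>s'<m j. \<bar>A i j s s'\<bar> * B)"
    using nbrs_lt B0 by (intro sum_mono2) (auto intro: sum_nonneg)
  also have "\<dots> = B * (\<Sum>j<n. \<Sum>s'<m j. \<bar>A i j s s'\<bar>)"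
    by (simp add: sum_distrib_left mult.commute)
  also have "\<dots> \<le> B * MA"
  proof (rule mult_left_mono[OF _ B0])
    have "(\<Sum>j<n. \<Sum>s'<m j. \<bar>A i j s s'\<bar>) \<le> (\<Sum>s<m i. \<Sum>j<n. \<Sum>s'<m j. \<bar>A i j s s'\<bar>)"
      using i by (intro member_le_sum[where i=s and f="\<lambda>s. \<Sum>j<n. \<Sum>s'<m j. \<bar>A i j s s'\<bar>"]) (auto intro: sum_nonneg)
    also have "\<dots> \<le> MA"
      unfolding MA_def
      using i by (intro member_le_sum[where i=i and f="\<lambda>i. \<Sum>s<m i. \<Sum>j<n. \<Sum>s'<m j. \<bar>A i j s s'\<bar>"]) (auto intro: sum_nonneg)
    finally show "(\<Sum>j<n. \<Sum>s'<m j. \<bar>A i j s s'\<bar>) \<le> MA" .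
  qed
  finally show ?thesis by (simp add: mult.commute)
qed

lemma logit_lower:
  assumes i: "i < n" "s < m i" and B: "\<And>j s'. j < n \<Longrightarrow> s' < m j \<Longrightarrow> \<bar>x j s'\<bar> \<le> B"
  shows "exp (- 2 * beta * MA * B) / Mm \<le> logit n m E A beta i s x"
proof -
  let ?U = "MA * B"
  have num: "exp (- beta * ?U) \<le> exp (beta * payoff n m E A i s x)"
  proof -
    have "- ?U \<le> payoff n m E A i s x" using payoff_bound[of i s x B, OF i B] by (auto simp: abs_le_iff)
    then have "beta * (- ?U) \<le> beta * payoff n m E A i s x" using bpos by (intro mult_left_mono) auto
    then show ?thesis by simp
  qed
  have den: "(\<Sum>t<m i. exp (beta * payoff n m E A i t x)) \<le> Mm * exp (beta * ?U)"
  proof -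
    have "(\<Sum>t<m i. exp (beta * payoff n m E A i t x)) \<le> (\<Sum>t<m i. exp (beta * ?U))"
    proof (rule sum_mono)
      fix t assume "t \<in> {..<m i}"
      then have "payoff n m E A i t x \<le> ?U" using payoff_bound[of i t x B, OF i(1) _ B] by auto
      then show "exp (beta * payoff n m E A i t x) \<le> exp (beta * ?U)" using bpos by auto
    qed
    also have "\<dots> = real (m i) * exp (beta * ?U)" by simp
    also have "\<dots> \<le> Mm * exp (beta * ?U)" using m_le_Mm[OF i(1)] by (intro mult_right_mono) auto
    finally show ?thesis .
  qed
  have dpos: "0 < (\<Sum>t<m i. exp (beta * payoff n m E A i t x))" by (rule denom_pos[OF i(1)])
  have "exp (- 2 * beta * MA * B) / Mm = exp (- beta * ?U) / (Mm * exp (beta * ?U))"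
    using Mm_ge1 by (simp add: field_simps exp_add[symmetric])
  also have "\<dots> \<le> exp (beta * payoff n m E A i s x) / (Mm * exp (beta * ?U))"
    using num Mm_ge1 by (intro divide_right_mono) auto
  also have "\<dots> \<le> exp (beta * payoff n m E A i s x) / (\<Sum>t<m i. exp (beta * payoff n m E A i t x))"
    using den dpos by (intro divide_left_mono) auto
  finally show ?thesis unfolding logit_def .
qed


lemma SP_formula:
  assumes i: "i < n"
  shows "second_partial (logit n m E A beta i s) j s' x =
    lP2 (m i) beta (\<lambda>t. payoff n m E A i t x - (if j \<in> nbrs n E i \<and> s' < m j then A i j t s' else 0) * x j s')
      (\<lambda>t. if j \<in> nbrs n E i \<and> s' < m j then A i j t s' else 0) s (x j s')"
proof -
  have "(\<lambda>k. logit n m E A beta i s (x(j := (x j)(s' := k)))) =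
    lP (m i) beta (\<lambda>t. payoff n m E A i t x - (if j \<in> nbrs n E i \<and> s' < m j then A i j t s' else 0) * x j s')
      (\<lambda>t. if j \<in> nbrs n E i \<and> s' < m j then A i j t s' else 0) s"
    by (rule ext) (rule logit_line)
  then show ?thesis unfolding second_partial_def
    using deriv_deriv_lP mpos i by simp
qed

lemma SP_sum:
  assumes i: "i < n"
  shows "(\<Sum>s<m i. second_partial (logit n m E A beta i s) j s' x) = 0"
  using lP2_sum[of "m i"] mpos i by (simp add: SP_formula[OF i])

lemma SP_bound:
  assumes i: "i < n" "s < m i"
  shows "\<bar>second_partial (logit n m E A beta i s) j s' x\<bar> \<le> 6 * beta\<^sup>2 * MA\<^sup>2"
  unfolding SP_formula[OF i(1)]
proof (rule lP2_bound)
  show "0 < m i" using mpos i by auto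
  show "s < m i" by fact
  fix r assume r: "r < m i"
  show "\<bar>if j \<in> nbrs n E i \<and> s' < m j then A i j r s' else 0\<bar> \<le> MA"
    using A_le_MA[OF i(1) r, of j s'] nbrs_lt[of j i] MA_nonneg by auto
qed

definition Fb :: "state \<Rightarrow> state \<Rightarrow> nat \<Rightarrow> nat \<Rightarrow> real" where
  "Fb x y i j = (\<Sum>s<m i. \<Sum>s'<m j. x i s * A i j s s' * y j s')"

lemma bil_F: "bil x y = (\<Sum>i<n. \<Sum>j\<in>nbrs n E i. Fb x y i j)"
proof -
  have "bil x y = (\<Sum>i<n. \<Sum>s<m i. \<Sum>j\<in>nbrs n E i. \<Sum>s'<m j. x i s * A i j s s' * y j s')"
    unfolding bil_def payoff_def by (simp add: sum_distrib_left mult.assoc)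
  also have "\<dots> = (\<Sum>i<n. \<Sum>j\<in>nbrs n E i. Fb x y i j)"
    unfolding Fb_def by (rule sum.cong[OF refl]) (rule sum.swap)
  finally show ?thesis .
qed

lemma Fb_swap: "E i j \<Longrightarrow> Fb y x i j = Fb x y j i"
proof -
  assume e: "E i j"
  have "Fb y x i j = (\<Sum>s<m i. \<Sum>s'<m j. x j s' * A j i s' s * y i s)"
    unfolding Fb_def using coord e unfolding coordination_def
    by (intro sum.cong refl) (auto simp: mult_ac)
  also have "\<dots> = Fb x y j i" unfolding Fb_def by (rule sum.swap)
  finally show ?thesis .
qed

lemma bil_sym: "bil x y = bil y x"
proof -
  have nb: "\<And>i. nbrs n E i = {j \<in> {..<n}. E i j}" unfolding nbrs_def by auto
  have "bil y x = (\<Sum>i<n. \<Sum>j\<in>nbrs n E i. Fb x y j i)"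
    unfolding bil_F nbrs_def by (intro sum.cong refl) (simp add: Fb_swap)
  also have "\<dots> = (\<Sum>i\<in>{..<n}. \<Sum>j\<in>{j \<in> {..<n}. E i j}. Fb x y j i)" by (simp add: nb)
  also have "\<dots> = (\<Sum>j\<in>{..<n}. \<Sum>i\<in>{i \<in> {..<n}. E i j}. Fb x y j i)"
    by (rule sum.swap_restrict) auto
  also have "\<dots> = (\<Sum>j<n. \<Sum>i\<in>nbrs n E j. Fb x y j i)"
    using sg unfolding simple_graph_def nbrs_def by (intro sum.cong refl) blast+
  also have "\<dots> = bil x y" unfolding bil_F ..
  finally show ?thesis by simp
qed

end


lemma dinv: "0 < lam + t + 1 \<Longrightarrow>
   ((\<lambda>\<tau>. C / (lam + \<tau> + 1)) has_real_derivative - C / (lam + t + 1)\<^sup>2) (at t within S)"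
  by (auto intro!: derivative_eq_intros simp: power2_eq_square field_simps)

lemma cp_alg: "0 < (T::real) \<Longrightarrow> 6 * b\<^sup>2 * M\<^sup>2 * ((l + 1) / T)\<^sup>2 * S / (2 * T) = 3 * b\<^sup>2 * M\<^sup>2 * (l + 1)\<^sup>2 * S / T ^ 3"
  by (simp add: power_divide power2_eq_square power3_eq_cube field_simps)

locale orbit = game +
  fixes sigma2 :: state and mu :: "real \<Rightarrow> state"
  assumes sig: "\<forall>j<n. \<forall>s<m j. 0 \<le> sigma2 j s"
    and het: "hetero_orbit n m E A beta lam sigma2 mu"
    and init: "mu 0 \<in> prod_simplex n m"
begin

definition pert :: "real \<Rightarrow> nat \<Rightarrow> nat \<Rightarrow> real" where
  "pert t i s = (\<Sum>j\<in>nbrs n E i. \<Sum>s'<m j.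
                second_partial (logit n m E A beta i s) j s' (mu t)
                * ((lam + 1) / (lam + t + 1))\<^sup>2 * sigma2 j s')
             / (2 * (lam + t + 1))"

definition D :: "real \<Rightarrow> nat \<Rightarrow> nat \<Rightarrow> real" where
  "D t i s = (logit n m E A beta i s (mu t) - mu t i s) / (lam + t + 1) + pert t i s"

definition S2 where "S2 = (\<Sum>j<n. \<Sum>s'<m j. sigma2 j s')"

definition Cp where "Cp = 3 * beta\<^sup>2 * MA\<^sup>2 * (lam + 1)\<^sup>2 * S2"

lemma S2_nonneg: "0 \<le> S2"
  unfolding S2_def using sig by (intro sum_nonneg) auto

lemma Cp_nonneg: "0 \<le> Cp"
  unfolding Cp_def using S2_nonneg by simp

lemma T_pos: "0 \<le> t \<Longrightarrow> 0 < lam + t + 1"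
  using lam0 by simp

lemma dmu: "0 \<le> t \<Longrightarrow> i < n \<Longrightarrow> s < m i \<Longrightarrow>
   ((\<lambda>\<tau>. mu \<tau> i s) has_real_derivative D t i s) (at t within {0..})"
  using het unfolding hetero_orbit_def D_def pert_def by blast

lemma pert_sum: "i < n \<Longrightarrow> (\<Sum>s<m i. pert t i s) = 0"
proof -
  assume i: "i < n"
  let ?q = "((lam + 1) / (lam + t + 1))\<^sup>2"
  have "(\<Sum>s<m i. \<Sum>j\<in>nbrs n E i. \<Sum>s'<m j.
                second_partial (logit n m E A beta i s) j s' (mu t) * ?q * sigma2 j s')
      = (\<Sum>j\<in>nbrs n E i. \<Sum>s'<m j. \<Sum>s<m i.
                second_partial (logit n m E A beta i s) j s' (mu t) * ?q * sigma2 j s')"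
    by (subst sum.swap) (rule sum.cong[OF refl], rule sum.swap)
  also have "\<dots> = (\<Sum>j\<in>nbrs n E i. \<Sum>s'<m j. (\<Sum>s<m i.
                second_partial (logit n m E A beta i s) j s' (mu t)) * ?q * sigma2 j s')"
    by (simp add: sum_distrib_right)
  also have "\<dots> = 0" using SP_sum[OF i] by simp
  finally show ?thesis unfolding pert_def by (simp add: sum_divide_distrib[symmetric])
qed

lemma pert_bound:
  assumes t: "0 \<le> t" and i: "i < n" "s < m i"
  shows "\<bar>pert t i s\<bar> \<le> Cp / (lam + t + 1) ^ 3"
proof -
  let ?q = "((lam + 1) / (lam + t + 1))\<^sup>2"
  let ?K = "6 * beta\<^sup>2 * MA\<^sup>2"
  have T: "0 < lam + t + 1" using T_pos[OF t] .
  have "\<bar>\<Sum>j\<in>nbrs n E i. \<Sum>s'<m j.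
                second_partial (logit n m E A beta i s) j s' (mu t) * ?q * sigma2 j s'\<bar>
     \<le> (\<Sum>j\<in>nbrs n E i. \<Sum>s'<m j. ?K * ?q * sigma2 j s')"
  proof -
    have "\<bar>\<Sum>j\<in>nbrs n E i. \<Sum>s'<m j.
                second_partial (logit n m E A beta i s) j s' (mu t) * ?q * sigma2 j s'\<bar>
       \<le> (\<Sum>j\<in>nbrs n E i. \<Sum>s'<m j.
                \<bar>second_partial (logit n m E A beta i s) j s' (mu t) * ?q * sigma2 j s'\<bar>)"
      by (rule order.trans[OF sum_abs sum_mono]) (rule sum_abs)
    also have "\<dots> \<le> (\<Sum>j\<in>nbrs n E i. \<Sum>s'<m j. ?K * ?q * sigma2 j s')"
    proof (intro sum_mono)
      fix j s' assume j: "j \<in> nbrs n E i" and s': "s' \<in> {..<m j}"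
      have sg0: "0 \<le> sigma2 j s'" using sig nbrs_lt[OF j] s' by auto
      have "\<bar>second_partial (logit n m E A beta i s) j s' (mu t)\<bar> * (?q * sigma2 j s') \<le> ?K * (?q * sigma2 j s')"
        using SP_bound[OF i, of j s' "mu t"] sg0 by (intro mult_right_mono) auto
      then show "\<bar>second_partial (logit n m E A beta i s) j s' (mu t) * ?q * sigma2 j s'\<bar> \<le> ?K * ?q * sigma2 j s'"
        using sg0 by (simp add: abs_mult mult.assoc)
    qed
    finally show ?thesis .
  qed
  also have "\<dots> = ?K * ?q * (\<Sum>j\<in>nbrs n E i. \<Sum>s'<m j. sigma2 j s')"
    by (simp add: sum_distrib_left)
  also have "\<dots> \<le> ?K * ?q * S2"
  proof (rule mult_left_mono)
    show "(\<Sum>j\<in>nbrs n E i. \<Sum>s'<m j. sigma2 j s') \<le> S2"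
      unfolding S2_def using nbrs_lt sig by (intro sum_mono2) (auto intro!: sum_nonneg)
  qed simp
  finally have num: "\<bar>\<Sum>j\<in>nbrs n E i. \<Sum>s'<m j.
                second_partial (logit n m E A beta i s) j s' (mu t) * ?q * sigma2 j s'\<bar> \<le> ?K * ?q * S2" .
  have "\<bar>pert t i s\<bar> \<le> ?K * ?q * S2 / (2 * (lam + t + 1))"
    unfolding pert_def using T num by (simp add: abs_divide divide_right_mono)
  also have "\<dots> = Cp / (lam + t + 1) ^ 3"
    unfolding Cp_def by (rule cp_alg[OF T])
  finally show ?thesis .
qed

lemma pertT_bound:
  assumes t: "0 \<le> t" and i: "i < n" "s < m i"
  shows "\<bar>pert t i s * (lam + t + 1)\<bar> \<le> Cp / (lam + t + 1)\<^sup>2"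
proof -
  have T: "0 < lam + t + 1" using T_pos[OF t] .
  have "\<bar>pert t i s * (lam + t + 1)\<bar> \<le> Cp / (lam + t + 1) ^ 3 * (lam + t + 1)"
  proof -
    have "\<bar>pert t i s\<bar> * (lam + t + 1) \<le> Cp / (lam + t + 1) ^ 3 * (lam + t + 1)"
      using T by (intro mult_right_mono[OF pert_bound[OF assms]]) auto
    then show ?thesis using T by (simp add: abs_mult)
  qed
  also have "\<dots> = Cp / (lam + t + 1)\<^sup>2" using T by (simp add: power2_eq_square power3_eq_cube)
  finally show ?thesis .
qed

lemma sum_one: "0 \<le> t \<Longrightarrow> i < n \<Longrightarrow> (\<Sum>s<m i. mu t i s) = 1"
proof -
  assume t: "0 \<le> t" and i: "i < n"
  let ?h = "\<lambda>\<tau>. ((\<Sum>s<m i. mu \<tau> i s) - 1) * (lam + \<tau> + 1)"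
  have "\<exists>c. \<forall>x\<in>{0..}. ?h x = c"
  proof (rule has_field_derivative_zero_constant)
    fix x :: real assume x: "x \<in> {0..}"
    have T: "0 < lam + x + 1" using T_pos x by auto
    have dS: "((\<lambda>\<tau>. \<Sum>s<m i. mu \<tau> i s) has_real_derivative (\<Sum>s<m i. D x i s)) (at x within {0..})"
      using dmu x i by (intro DERIV_sum) auto
    have "(?h has_real_derivative ((\<Sum>s<m i. D x i s) - 0) * (lam + x + 1) + (0 + 1 + 0) * ((\<Sum>s<m i. mu x i s) - 1)) (at x within {0..})"
      by (intro DERIV_mult DERIV_diff dS DERIV_const DERIV_add DERIV_ident)
    moreover have "(\<Sum>s<m i. D x i s) = (1 - (\<Sum>s<m i. mu x i s)) / (lam + x + 1)"
      unfolding D_def using pert_sum[OF i, of x] logit_sum[OF i, of "mu x"]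
      by (simp add: sum.distrib sum_divide_distrib[symmetric] sum_subtractf)
    ultimately show "(?h has_real_derivative 0) (at x within {0..})" using T by simp
  qed simp
  then obtain c where c: "\<forall>x\<in>{0..}. ?h x = c" by blast
  have h0: "?h 0 = 0" using init i unfolding prod_simplex_def by simp
  have "?h 0 = c" using c[rule_format, of 0] by simp
  with h0 have "c = 0" by linarith
  then have "?h t = 0" using c t by auto
  then show ?thesis using T_pos[OF t] by simp
qed

lemma dH: "0 \<le> t \<Longrightarrow> i < n \<Longrightarrow> s < m i \<Longrightarrow>
   ((\<lambda>\<tau>. mu \<tau> i s * (lam + \<tau> + 1)) has_real_derivative
      logit n m E A beta i s (mu t) + pert t i s * (lam + t + 1)) (at t within {0..})"
proof -
  assume t: "0 \<le> t" and i: "i < n" "s < m i"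
  have T: "0 < lam + t + 1" using T_pos[OF t] .
  have "((\<lambda>\<tau>. mu \<tau> i s * (lam + \<tau> + 1)) has_real_derivative
      D t i s * (lam + t + 1) + (0 + 1 + 0) * mu t i s) (at t within {0..})"
    by (intro DERIV_mult dmu[OF t i] DERIV_add DERIV_const DERIV_ident)
  moreover have "D t i s * (lam + t + 1) + (0 + 1 + 0) * mu t i s = logit n m E A beta i s (mu t) + pert t i s * (lam + t + 1)"
    unfolding D_def using T by (simp add: field_simps)
  ultimately show ?thesis by simp
qed

end


lemma div_le_selfr: "0 \<le> (C::real) \<Longrightarrow> 1 \<le> T \<Longrightarrow> C / T \<le> C"
  by (simp add: divide_le_eq mult_le_cancel_left1)

context orbit begin

lemma dcp: "0 \<le> t \<Longrightarrow> ((\<lambda>\<tau>. Cp / (lam + \<tau> + 1)) has_real_derivative - Cp / (lam + t + 1)\<^sup>2) (at t within S)"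
  by (rule dinv) (rule T_pos)

lemma mu0: "i < n \<Longrightarrow> s < m i \<Longrightarrow> 0 \<le> mu 0 i s \<and> mu 0 i s \<le> 1"
proof -
  assume i: "i < n" "s < m i"
  have a: "\<forall>s<m i. 0 \<le> mu 0 i s" using init i unfolding prod_simplex_def by auto
  have "mu 0 i s \<le> (\<Sum>s<m i. mu 0 i s)" using a i by (intro member_le_sum) auto
  then show ?thesis using a i sum_one[of 0 i] by auto
qed

lemma mu_ge: assumes t: "0 \<le> t" and i: "i < n" "s < m i" shows "- Cp \<le> mu t i s"
proof -
  let ?g = "\<lambda>\<tau>. mu \<tau> i s * (lam + \<tau> + 1) - Cp / (lam + \<tau> + 1)"
  have "?g 0 \<le> ?g t"
  proof (rule mono_deriv[where g = ?g and g' = "\<lambda>\<tau>. logit n m E A beta i s (mu \<tau>) + pert \<tau> i s * (lam + \<tau> + 1) - (- Cp / (lam + \<tau> + 1)\<^sup>2)"])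
    fix \<tau> :: real assume "0 \<le> \<tau>" "\<tau> \<le> t"
    then show "(?g has_real_derivative logit n m E A beta i s (mu \<tau>) + pert \<tau> i s * (lam + \<tau> + 1) - (- Cp / (lam + \<tau> + 1)\<^sup>2)) (at \<tau> within {0..})"
      by (intro DERIV_diff dH i dcp)
    have "- (Cp / (lam + \<tau> + 1)\<^sup>2) \<le> pert \<tau> i s * (lam + \<tau> + 1)"
      using pertT_bound[OF \<open>0 \<le> \<tau>\<close> i] by (simp add: abs_le_iff)
    then show "0 \<le> logit n m E A beta i s (mu \<tau>) + pert \<tau> i s * (lam + \<tau> + 1) - (- Cp / (lam + \<tau> + 1)\<^sup>2)"
      using logit_pos[OF i(1), of s "mu \<tau>"] by simp
  qed (rule t)
  moreover have "- Cp \<le> ?g 0"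
  proof -
    have "Cp / (lam + 1) \<le> Cp" using Cp_nonneg lam0 by (intro div_le_selfr) auto
    moreover have "0 \<le> mu 0 i s * (lam + 1)" using mu0[OF i] lam0 by simp
    ultimately show ?thesis by simp
  qed
  ultimately have h: "- Cp + Cp / (lam + t + 1) \<le> mu t i s * (lam + t + 1)" by simp
  have T: "1 \<le> lam + t + 1" using lam0 t by simp
  have "- Cp \<le> - Cp + Cp / (lam + t + 1)" using Cp_nonneg T by simp
  then have "- Cp \<le> mu t i s * (lam + t + 1)" using h by linarith
  then have "- Cp / (lam + t + 1) \<le> mu t i s * (lam + t + 1) / (lam + t + 1)" using T by (intro divide_right_mono) auto
  then have "- Cp / (lam + t + 1) \<le> mu t i s" using T by simp
  moreover have "- Cp \<le> - Cp / (lam + t + 1)" using div_le_selfr[OF Cp_nonneg T] by simp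
  ultimately show ?thesis by linarith
qed


lemma mu_le: assumes t: "0 \<le> t" and i: "i < n" "s < m i" shows "mu t i s \<le> 1 + Cp"
proof -
  let ?g = "\<lambda>\<tau>. \<tau> - mu \<tau> i s * (lam + \<tau> + 1) - Cp / (lam + \<tau> + 1)"
  have "?g 0 \<le> ?g t"
  proof (rule mono_deriv[where g = ?g and g' = "\<lambda>\<tau>. 1 - (logit n m E A beta i s (mu \<tau>) + pert \<tau> i s * (lam + \<tau> + 1)) - (- Cp / (lam + \<tau> + 1)\<^sup>2)"])
    fix \<tau> :: real assume "0 \<le> \<tau>" "\<tau> \<le> t"
    then show "(?g has_real_derivative 1 - (logit n m E A beta i s (mu \<tau>) + pert \<tau> i s * (lam + \<tau> + 1)) - (- Cp / (lam + \<tau> + 1)\<^sup>2)) (at \<tau> within {0..})"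
      by (intro DERIV_diff dH i dcp DERIV_ident)
    have "pert \<tau> i s * (lam + \<tau> + 1) \<le> Cp / (lam + \<tau> + 1)\<^sup>2"
      using pertT_bound[OF \<open>0 \<le> \<tau>\<close> i] by (simp add: abs_le_iff)
    then show "0 \<le> 1 - (logit n m E A beta i s (mu \<tau>) + pert \<tau> i s * (lam + \<tau> + 1)) - (- Cp / (lam + \<tau> + 1)\<^sup>2)"
      using logit_le1[OF i, of "mu \<tau>"] by simp
  qed (rule t)
  moreover have "- (lam + 1) - Cp \<le> ?g 0"
  proof -
    have "Cp / (lam + 1) \<le> Cp" using Cp_nonneg lam0 by (intro div_le_selfr) auto
    moreover have "mu 0 i s * (lam + 1) \<le> 1 * (lam + 1)" using mu0[OF i] lam0 by (intro mult_right_mono) auto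
    ultimately show ?thesis by simp
  qed
  ultimately have h: "mu t i s * (lam + t + 1) \<le> (lam + t + 1) + Cp - Cp / (lam + t + 1)" by simp
  have T: "1 \<le> lam + t + 1" using lam0 t by simp
  have "Cp / (lam + t + 1) \<ge> 0" using Cp_nonneg T by simp
  have "0 \<le> Cp * (lam + t)" using Cp_nonneg lam0 t by simp
  then have "mu t i s * (lam + t + 1) \<le> (1 + Cp) * (lam + t + 1)" using h \<open>Cp / (lam + t + 1) \<ge> 0\<close>
    by (simp add: algebra_simps)
  then show ?thesis using T by simp
qed

definition Bd where "Bd = 1 + Cp"

lemma mu_abs: "0 \<le> t \<Longrightarrow> j < n \<Longrightarrow> s < m j \<Longrightarrow> \<bar>mu t j s\<bar> \<le> Bd"
  using mu_ge[of t j s] mu_le[of t j s] Cp_nonneg unfolding Bd_def by (simp add: abs_le_iff)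

definition cc where "cc = exp (- 2 * beta * MA * Bd) / Mm"

lemma cc_pos: "0 < cc" unfolding cc_def using Mm_ge1 by simp

lemma logit_ge: "0 \<le> t \<Longrightarrow> i < n \<Longrightarrow> s < m i \<Longrightarrow> cc \<le> logit n m E A beta i s (mu t)"
  unfolding cc_def by (rule logit_lower) (auto intro: mu_abs)

lemma cc_le1: "cc \<le> 1"
  using logit_ge[of 0 0 0] logit_le1[of 0 0 "mu 0"] npos mpos by force

lemma mu_grow: assumes t: "0 \<le> t" and i: "i < n" "s < m i"
  shows "cc * t - Cp \<le> mu t i s * (lam + t + 1)"
proof -
  let ?g = "\<lambda>\<tau>. mu \<tau> i s * (lam + \<tau> + 1) - cc * \<tau> - Cp / (lam + \<tau> + 1)"
  have "?g 0 \<le> ?g t"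
  proof (rule mono_deriv[where g = ?g and g' = "\<lambda>\<tau>. logit n m E A beta i s (mu \<tau>) + pert \<tau> i s * (lam + \<tau> + 1) - cc * 1 - (- Cp / (lam + \<tau> + 1)\<^sup>2)"])
    fix \<tau> :: real assume "0 \<le> \<tau>" "\<tau> \<le> t"
    then show "(?g has_real_derivative logit n m E A beta i s (mu \<tau>) + pert \<tau> i s * (lam + \<tau> + 1) - cc * 1 - (- Cp / (lam + \<tau> + 1)\<^sup>2)) (at \<tau> within {0..})"
      by (intro DERIV_diff dH i dcp DERIV_cmult DERIV_ident)
    have "- (Cp / (lam + \<tau> + 1)\<^sup>2) \<le> pert \<tau> i s * (lam + \<tau> + 1)"
      using pertT_bound[OF \<open>0 \<le> \<tau>\<close> i] by (simp add: abs_le_iff)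
    then show "0 \<le> logit n m E A beta i s (mu \<tau>) + pert \<tau> i s * (lam + \<tau> + 1) - cc * 1 - (- Cp / (lam + \<tau> + 1)\<^sup>2)"
      using logit_ge[OF \<open>0 \<le> \<tau>\<close> i] by simp
  qed (rule t)
  moreover have "- Cp \<le> ?g 0"
  proof -
    have "Cp / (lam + 1) \<le> Cp" using Cp_nonneg lam0 by (intro div_le_selfr) auto
    moreover have "0 \<le> mu 0 i s * (lam + 1)" using mu0[OF i] lam0 by simp
    ultimately show ?thesis by simp
  qed
  ultimately have "- Cp + cc * t + Cp / (lam + t + 1) \<le> mu t i s * (lam + t + 1)" by simp
  moreover have "0 \<le> Cp / (lam + t + 1)" using Cp_nonneg lam0 t by simp
  ultimately show ?thesis by linarith
qed

definition t1 where "t1 = 2 * Cp / cc + lam + 2"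
definition c0 where "c0 = cc / 4"

lemma t1_pos: "0 < t1"
proof -
  have "0 \<le> 2 * Cp / cc" using Cp_nonneg cc_pos by simp
  then show ?thesis unfolding t1_def using lam0 by linarith
qed

lemma c0_pos: "0 < c0" unfolding c0_def using cc_pos by simp

lemma c0_lt1: "c0 < 1" unfolding c0_def using cc_le1 by simp

lemma c0_lt_cc: "c0 < cc" unfolding c0_def using cc_pos by simp

lemma mu_pos: assumes t: "t1 \<le> t" and i: "i < n" "s < m i" shows "c0 \<le> mu t i s"
proof -
  have t0: "0 \<le> t" using t t1_pos by simp
  have T: "0 < lam + t + 1" using T_pos[OF t0] .
  have A1: "cc * t1 = 2 * Cp + cc * (lam + 2)" unfolding t1_def using cc_pos by (simp add: field_simps)
  have A2: "cc * t1 \<le> cc * t" using t cc_pos by simp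
  have "c0 * (lam + t + 1) \<le> cc * t - Cp"
  proof -
    have l: "0 \<le> cc * lam" using lam0 cc_pos by simp
    have e1: "cc / 4 * (lam + t + 1) = cc * lam / 4 + cc * t / 4 + cc / 4" by (simp add: algebra_simps)
    have e2: "cc * (lam + 2) = cc * lam + 2 * cc" by (simp add: algebra_simps)
    show ?thesis unfolding c0_def e1 using A1 A2 e2 l cc_pos Cp_nonneg by linarith
  qed
  also have "\<dots> \<le> mu t i s * (lam + t + 1)" by (rule mu_grow[OF t0 i])
  finally show ?thesis using T by simp
qed

lemma mu_le1: assumes t: "t1 \<le> t" and i: "i < n" "s < m i" shows "mu t i s \<le> 1"
proof -
  have t0: "0 \<le> t" using t t1_pos by simp
  have "mu t i s \<le> (\<Sum>s<m i. mu t i s)"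
    using i by (intro member_le_sum) (auto intro!: order.trans[OF less_imp_le[OF c0_pos] mu_pos[OF t i(1)]])
  then show ?thesis using sum_one[OF t0 i(1)] by simp
qed

definition K1 where "K1 = 1 + Bd + Cp"

lemma D_bound: assumes t: "0 \<le> t" and i: "i < n" "s < m i"
  shows "\<bar>D t i s\<bar> \<le> K1 / (lam + t + 1)"
proof -
  have T: "1 \<le> lam + t + 1" using lam0 t by simp
  have a: "\<bar>logit n m E A beta i s (mu t) - mu t i s\<bar> \<le> 1 + Bd"
    using mu_abs[OF t i] logit_pos[OF i(1), of s "mu t"] logit_le1[OF i, of "mu t"] by (simp add: abs_le_iff)
  have "\<bar>pert t i s\<bar> \<le> Cp / (lam + t + 1) ^ 3" by (rule pert_bound[OF t i])
  also have "\<dots> \<le> Cp / (lam + t + 1)"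
  proof (rule divide_left_mono)
    show "lam + t + 1 \<le> (lam + t + 1) ^ 3" using power_increasing[of 1 3 "lam + t + 1"] T by simp
    show "0 \<le> Cp" by (rule Cp_nonneg)
    show "0 < (lam + t + 1) ^ 3 * (lam + t + 1)" using T by simp
  qed
  finally have b: "\<bar>pert t i s\<bar> \<le> Cp / (lam + t + 1)" .
  have "\<bar>D t i s\<bar> \<le> \<bar>logit n m E A beta i s (mu t) - mu t i s\<bar> / (lam + t + 1) + \<bar>pert t i s\<bar>"
    unfolding D_def using abs_triangle_ineq[of "(logit n m E A beta i s (mu t) - mu t i s) / (lam + t + 1)" "pert t i s"] T
    by (simp add: abs_divide)
  also have "\<dots> \<le> (1 + Bd) / (lam + t + 1) + Cp / (lam + t + 1)"
    using a b T by (intro add_mono divide_right_mono) auto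
  finally show ?thesis unfolding K1_def by (simp add: add_divide_distrib)
qed

lemma mu_lip: assumes a: "0 \<le> a" "a \<le> t" and i: "i < n" "s < m i"
  shows "\<bar>mu t i s - mu a i s\<bar> \<le> K1 * (t - a) / (lam + a + 1)"
proof -
  have Ta: "0 < lam + a + 1" using T_pos[OF a(1)] .
  have der: "\<And>\<tau>. a \<le> \<tau> \<Longrightarrow> ((\<lambda>\<tau>. mu \<tau> i s) has_real_derivative D \<tau> i s) (at \<tau> within {a..})"
    using a by (intro DERIV_subset[OF dmu[OF _ i]]) auto
  have Db: "\<And>\<tau>. a \<le> \<tau> \<Longrightarrow> \<bar>D \<tau> i s\<bar> \<le> K1 / (lam + a + 1)"
  proof -
    fix \<tau> assume "a \<le> \<tau>"
    then have "\<bar>D \<tau> i s\<bar> \<le> K1 / (lam + \<tau> + 1)" using a by (intro D_bound i) auto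
    also have "\<dots> \<le> K1 / (lam + a + 1)"
      using \<open>a \<le> \<tau>\<close> Ta unfolding K1_def Bd_def using Cp_nonneg by (intro divide_left_mono) auto
    finally show "\<bar>D \<tau> i s\<bar> \<le> K1 / (lam + a + 1)" .
  qed
  let ?g1 = "\<lambda>\<tau>. K1 / (lam + a + 1) * \<tau> - mu \<tau> i s"
  let ?g2 = "\<lambda>\<tau>. K1 / (lam + a + 1) * \<tau> + mu \<tau> i s"
  have "?g1 a \<le> ?g1 t"
  proof (rule mono_deriv[where g = ?g1 and g' = "\<lambda>\<tau>. K1 / (lam + a + 1) * 1 - D \<tau> i s"])
    fix \<tau> :: real assume "a \<le> \<tau>" "\<tau> \<le> t"
    then show "(?g1 has_real_derivative K1 / (lam + a + 1) * 1 - D \<tau> i s) (at \<tau> within {a..})"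
      by (intro DERIV_diff der DERIV_cmult DERIV_ident)
    show "0 \<le> K1 / (lam + a + 1) * 1 - D \<tau> i s" using Db[OF \<open>a \<le> \<tau>\<close>] by (simp add: abs_le_iff)
  qed (rule a)
  moreover have "?g2 a \<le> ?g2 t"
  proof (rule mono_deriv[where g = ?g2 and g' = "\<lambda>\<tau>. K1 / (lam + a + 1) * 1 + D \<tau> i s"])
    fix \<tau> :: real assume "a \<le> \<tau>" "\<tau> \<le> t"
    then show "(?g2 has_real_derivative K1 / (lam + a + 1) * 1 + D \<tau> i s) (at \<tau> within {a..})"
      by (intro DERIV_add der DERIV_cmult DERIV_ident)
    show "0 \<le> K1 / (lam + a + 1) * 1 + D \<tau> i s" using Db[OF \<open>a \<le> \<tau>\<close>] by (simp add: abs_le_iff)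
  qed (rule a)
  ultimately have "\<bar>mu t i s - mu a i s\<bar> \<le> K1 / (lam + a + 1) * (t - a)"
    by (simp only: abs_le_iff right_diff_distrib) linarith
  then show ?thesis by simp
qed

end


lemma ln_ineq:
  fixes a b :: real
  assumes a: "0 < a" "a \<le> 1" and b: "0 < b" "b \<le> 1"
  shows "(a - b)\<^sup>2 \<le> (a - b) * (ln a - ln b)"
proof (cases "b \<le> a")
  case True
  have "ln (b / a) \<le> b / a - 1" using a b by (intro ln_le_minus_one) simp
  then have "1 - b / a \<le> ln a - ln b" using a b by (simp add: ln_div)
  moreover have "a - b \<le> 1 - b / a"
  proof -
    have "(a - b) * a \<le> (a - b) * 1" using True a by (intro mult_left_mono) auto
    then have "a - b \<le> (a - b) / a" using a by (simp add: le_divide_eq)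
    then show ?thesis using a by (simp add: diff_divide_distrib)
  qed
  ultimately have "a - b \<le> ln a - ln b" by linarith
  then have "(a - b) * (a - b) \<le> (a - b) * (ln a - ln b)" using True by (intro mult_left_mono) auto
  then show ?thesis by (simp add: power2_eq_square)
next
  case False
  have "ln (a / b) \<le> a / b - 1" using a b by (intro ln_le_minus_one) simp
  then have "1 - a / b \<le> ln b - ln a" using a b by (simp add: ln_div)
  moreover have "b - a \<le> 1 - a / b"
  proof -
    have "(b - a) * b \<le> (b - a) * 1" using False b by (intro mult_left_mono) auto
    then have "b - a \<le> (b - a) / b" using b by (simp add: le_divide_eq)
    then show ?thesis using b by (simp add: diff_divide_distrib)
  qed
  ultimately have "b - a \<le> ln b - ln a" by linarith
  then have "(b - a) * (b - a) \<le> (b - a) * (ln b - ln a)" using False by (intro mult_left_mono) auto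
  then show ?thesis by (simp add: power2_eq_square algebra_simps)
qed

lemma xlnx_bound: "0 < (x::real) \<Longrightarrow> - (x * ln x) \<le> 1"
proof -
  assume x: "0 < x"
  have "ln (1 / x) \<le> 1 / x - 1" using x by (intro ln_le_minus_one) simp
  then have "- ln x \<le> 1 / x - 1" using x by (simp add: ln_div)
  then have "x * (- ln x) \<le> x * (1 / x - 1)" using x by (intro mult_left_mono) auto
  then show ?thesis using x by (simp add: algebra_simps)
qed

lemma dinv2a: "0 < (x::real) \<Longrightarrow> ((\<lambda>x. C / (2 * x\<^sup>2)) has_real_derivative - C / x ^ 3) (at x)"
  by (auto intro!: derivative_eq_intros simp: power2_eq_square power3_eq_cube field_simps)

lemma dinv2: "0 < lam + t + 1 \<Longrightarrow>
   ((\<lambda>\<tau>. C / (2 * (lam + \<tau> + 1)\<^sup>2)) has_real_derivative - C / (lam + t + 1) ^ 3) (at t within S)"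
proof -
  assume T: "0 < lam + t + 1"
  have "((\<lambda>\<tau>. C / (2 * (lam + \<tau> + 1)\<^sup>2)) has_real_derivative (- C / (lam + t + 1) ^ 3) * (0 + 1 + 0)) (at t within S)"
    by (rule DERIV_chain2[where f="\<lambda>x. C / (2 * x\<^sup>2)" and g="\<lambda>\<tau>. lam + \<tau> + 1", OF dinv2a[OF T]]) (intro DERIV_add DERIV_const DERIV_ident)
  then show ?thesis by simp
qed

lemma dxlnx: "(f has_real_derivative d) (at t) \<Longrightarrow> 0 < f t \<Longrightarrow>
   ((\<lambda>\<tau>. f \<tau> * ln (f \<tau>)) has_real_derivative d * (ln (f t) + 1)) (at t)"
  by (auto intro!: derivative_eq_intros simp: field_simps)

lemma dlog: "0 < lam + t + 1 \<Longrightarrow>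
   ((\<lambda>\<tau>. ln (lam + \<tau> + 1)) has_real_derivative 1 / (lam + t + 1)) (at t within S)"
  by (auto intro!: derivative_eq_intros simp: field_simps)

context game begin

definition Ent :: "state \<Rightarrow> real" where
  "Ent x = (\<Sum>i<n. \<Sum>s<m i. x i s * ln (x i s))"

definition Lf :: "state \<Rightarrow> real" where
  "Lf x = beta / 2 * bil x x - Ent x"

definition gap :: "state \<Rightarrow> real" where
  "gap x = (\<Sum>i<n. \<Sum>s<m i. (logit n m E A beta i s x - x i s)\<^sup>2)"

lemma gap_nonneg: "0 \<le> gap x" unfolding gap_def by (intro sum_nonneg) auto

lemma ln_logit: "i < n \<Longrightarrow> ln (logit n m E A beta i s x) =
   beta * payoff n m E A i s x - ln (\<Sum>t<m i. exp (beta * payoff n m E A i t x))"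
  unfolding logit_def using denom_pos[of i x] by (simp add: ln_div)

end

context orbit begin

definition Lam where "Lam = - ln c0"
definition KL where "KL = Mm * Cp * Lam"

definition V :: "real \<Rightarrow> real" where
  "V t = Lf (mu t) - KL / (2 * (lam + t + 1)\<^sup>2)"

lemma Lam_pos: "0 < Lam" unfolding Lam_def using c0_pos c0_lt1 by simp

lemma KL_nonneg: "0 \<le> KL" unfolding KL_def using Mm_ge1 Cp_nonneg Lam_pos by simp

lemma dmu_at: "0 < t \<Longrightarrow> i < n \<Longrightarrow> s < m i \<Longrightarrow>
   ((\<lambda>\<tau>. mu \<tau> i s) has_real_derivative D t i s) (at t)"
proof -
  assume t: "0 < t" and i: "i < n" "s < m i"
  have "at t within {0..} = at t" by (rule at_within_interior) (use t in auto)
  then show ?thesis using dmu[OF _ i, of t] t by simp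
qed

lemma dpay: "0 < t \<Longrightarrow>
   ((\<lambda>\<tau>. payoff n m E A i s (mu \<tau>)) has_real_derivative payoff n m E A i s (D t)) (at t)"
  unfolding payoff_def
  by (intro DERIV_sum DERIV_cmult dmu_at) (auto dest: nbrs_lt)

lemma dbil: "0 < t \<Longrightarrow>
   ((\<lambda>\<tau>. bil (mu \<tau>) (mu \<tau>)) has_real_derivative bil (D t) (mu t) + bil (mu t) (D t)) (at t)"
proof -
  assume t: "0 < t"
  have "((\<lambda>\<tau>. \<Sum>i<n. \<Sum>s<m i. mu \<tau> i s * payoff n m E A i s (mu \<tau>)) has_real_derivative
     (\<Sum>i<n. \<Sum>s<m i. D t i s * payoff n m E A i s (mu t) + payoff n m E A i s (D t) * mu t i s)) (at t)"
    by (intro DERIV_sum DERIV_mult dmu_at dpay t) auto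
  then show ?thesis unfolding bil_def by (simp add: sum.distrib mult.commute)
qed

lemma dEnt: "t1 \<le> t \<Longrightarrow>
   ((\<lambda>\<tau>. Ent (mu \<tau>)) has_real_derivative (\<Sum>i<n. \<Sum>s<m i. D t i s * (ln (mu t i s) + 1))) (at t)"
proof -
  assume t: "t1 \<le> t"
  have t0: "0 < t" using t t1_pos by simp
  have "((\<lambda>\<tau>. \<Sum>i<n. \<Sum>s<m i. mu \<tau> i s * ln (mu \<tau> i s)) has_real_derivative
     (\<Sum>i<n. \<Sum>s<m i. D t i s * (ln (mu t i s) + 1))) (at t)"
  proof (intro DERIV_sum)
    fix i s assume "i \<in> {..<n}" "s \<in> {..<m i}"
    then show "((\<lambda>\<tau>. mu \<tau> i s * ln (mu \<tau> i s)) has_real_derivative D t i s * (ln (mu t i s) + 1)) (at t)"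
      using mu_pos[OF t] c0_pos dmu_at[OF t0] by (intro dxlnx) (auto intro: less_le_trans)
  qed
  then show ?thesis unfolding Ent_def by simp
qed

lemma D_sum: "0 \<le> t \<Longrightarrow> i < n \<Longrightarrow> (\<Sum>s<m i. D t i s) = 0"
  unfolding D_def using pert_sum[of i t] logit_sum[of i "mu t"] sum_one[of t i]
  by (simp add: sum.distrib sum_divide_distrib[symmetric] sum_subtractf)

definition LD where
  "LD t = (\<Sum>i<n. \<Sum>s<m i. D t i s * (ln (logit n m E A beta i s (mu t)) - ln (mu t i s)))"

lemma dLf: "t1 \<le> t \<Longrightarrow> ((\<lambda>\<tau>. Lf (mu \<tau>)) has_real_derivative LD t) (at t)"
proof -
  assume t: "t1 \<le> t"
  have t0: "0 < t" using t t1_pos by simp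
  have "((\<lambda>\<tau>. Lf (mu \<tau>)) has_real_derivative beta / 2 * (bil (D t) (mu t) + bil (mu t) (D t))
      - (\<Sum>i<n. \<Sum>s<m i. D t i s * (ln (mu t i s) + 1))) (at t)"
    unfolding Lf_def by (intro DERIV_diff DERIV_cmult dbil dEnt t t0)
  moreover have "beta / 2 * (bil (D t) (mu t) + bil (mu t) (D t))
      - (\<Sum>i<n. \<Sum>s<m i. D t i s * (ln (mu t i s) + 1)) = LD t"
  proof -
    let ?Z = "\<lambda>i. \<Sum>r<m i. exp (beta * payoff n m E A i r (mu t))"
    have "beta / 2 * (bil (D t) (mu t) + bil (mu t) (D t)) = beta * bil (D t) (mu t)"
      using bil_sym[of "mu t" "D t"] by simp
    also have "\<dots> = (\<Sum>i<n. \<Sum>s<m i. D t i s * (ln (logit n m E A beta i s (mu t)) + ln (?Z i)))"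
      unfolding bil_def by (simp add: sum_distrib_left ln_logit mult_ac)
    finally have "beta / 2 * (bil (D t) (mu t) + bil (mu t) (D t))
      - (\<Sum>i<n. \<Sum>s<m i. D t i s * (ln (mu t i s) + 1))
      = (\<Sum>i<n. \<Sum>s<m i. D t i s * (ln (logit n m E A beta i s (mu t)) - ln (mu t i s)) + D t i s * (ln (?Z i) - 1))"
      by (simp add: sum_subtractf[symmetric] algebra_simps)
    also have "\<dots> = LD t + (\<Sum>i<n. (ln (?Z i) - 1) * (\<Sum>s<m i. D t i s))"
    proof -
      have e: "\<And>i. (\<Sum>s<m i. D t i s * (ln (?Z i) - 1)) = (ln (?Z i) - 1) * (\<Sum>s<m i. D t i s)"
        unfolding sum_distrib_right[symmetric] by (rule mult.commute)
      show ?thesis unfolding LD_def sum.distrib e ..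
    qed
    also have "(\<Sum>i<n. (ln (?Z i) - 1) * (\<Sum>s<m i. D t i s)) = 0"
      using D_sum t0 by simp
    finally show ?thesis by simp
  qed
  ultimately show ?thesis by simp
qed


lemma term_lower:
  assumes t: "t1 \<le> t" and i: "i < n" "s < m i"
  shows "(logit n m E A beta i s (mu t) - mu t i s)\<^sup>2 / (lam + t + 1) - Cp * Lam / (lam + t + 1) ^ 3
     \<le> D t i s * (ln (logit n m E A beta i s (mu t)) - ln (mu t i s))"
proof -
  have t0: "0 \<le> t" using t t1_pos by simp
  have T: "0 < lam + t + 1" using T_pos[OF t0] .
  let ?f = "logit n m E A beta i s (mu t)" and ?x = "mu t i s"
  have f1: "0 < ?f" "?f \<le> 1" using logit_pos[OF i(1)] logit_le1[OF i] by auto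
  have fc: "c0 \<le> ?f" using logit_ge[OF t0 i] c0_lt_cc by simp
  have x1: "c0 \<le> ?x" "?x \<le> 1" using mu_pos[OF t i] mu_le1[OF t i] by auto
  have xp: "0 < ?x" using x1 c0_pos by simp
  have lf: "ln c0 \<le> ln ?f" "ln ?f \<le> 0" using fc c0_pos f1 by auto
  have lx: "ln c0 \<le> ln ?x" "ln ?x \<le> 0" using x1 c0_pos xp by auto
  have ld: "\<bar>ln ?f - ln ?x\<bar> \<le> Lam" unfolding Lam_def using lf lx by (simp add: abs_le_iff)
  have p: "\<bar>pert t i s * (ln ?f - ln ?x)\<bar> \<le> Cp / (lam + t + 1) ^ 3 * Lam"
    unfolding abs_mult using pert_bound[OF t0 i] ld by (intro mult_mono) auto
  have q: "(?f - ?x)\<^sup>2 / (lam + t + 1) \<le> (?f - ?x) * (ln ?f - ln ?x) / (lam + t + 1)"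
    using ln_ineq[OF f1 xp x1(2)] T by (intro divide_right_mono) auto
  have "D t i s * (ln ?f - ln ?x) = (?f - ?x) * (ln ?f - ln ?x) / (lam + t + 1) + pert t i s * (ln ?f - ln ?x)"
    unfolding D_def by (simp add: algebra_simps)
  then show ?thesis using p q by (simp add: abs_le_iff)
qed

lemma LD_lower: assumes t: "t1 \<le> t"
  shows "gap (mu t) / (lam + t + 1) - KL / (lam + t + 1) ^ 3 \<le> LD t"
proof -
  have "gap (mu t) / (lam + t + 1) - KL / (lam + t + 1) ^ 3 =
     (\<Sum>i<n. \<Sum>s<m i. (logit n m E A beta i s (mu t) - mu t i s)\<^sup>2 / (lam + t + 1) - Cp * Lam / (lam + t + 1) ^ 3)"
    unfolding gap_def KL_def Mm_def
    by (simp add: sum_subtractf sum_divide_distrib[symmetric] sum_distrib_right mult.assoc)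
  also have "\<dots> \<le> LD t" unfolding LD_def
    by (intro sum_mono term_lower[OF t]) auto
  finally show ?thesis .
qed

lemma dV: "t1 \<le> t \<Longrightarrow> (V has_real_derivative LD t - (- KL / (lam + t + 1) ^ 3)) (at t)"
proof -
  assume t: "t1 \<le> t"
  have T: "0 < lam + t + 1" using T_pos t t1_pos by simp
  show ?thesis unfolding V_def[abs_def]
    by (intro DERIV_diff dLf t dinv2 T)
qed

lemma V_upper: assumes t: "t1 \<le> t" shows "V t \<le> beta / 2 * (Mm * MA) + Mm"
proof -
  have t0: "0 \<le> t" using t t1_pos by simp
  have xb: "\<And>j s. j < n \<Longrightarrow> s < m j \<Longrightarrow> \<bar>mu t j s\<bar> \<le> 1"
    using mu_pos[OF t] mu_le1[OF t] c0_pos by (meson abs_le_iff less_le_trans neg_le_0_iff_le less_imp_le order.trans)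
  have "bil (mu t) (mu t) \<le> (\<Sum>i<n. \<Sum>s<m i. MA)"
    unfolding bil_def
  proof (intro sum_mono)
    fix i s assume i: "i \<in> {..<n}" "s \<in> {..<m i}"
    have "\<bar>mu t i s * payoff n m E A i s (mu t)\<bar> \<le> 1 * (MA * 1)"
      unfolding abs_mult using xb payoff_bound[of i s "mu t" 1] i by (intro mult_mono) auto
    then show "mu t i s * payoff n m E A i s (mu t) \<le> MA" by (simp add: abs_le_iff)
  qed
  also have "\<dots> = Mm * MA" unfolding Mm_def by (simp add: sum_distrib_right)
  finally have b: "bil (mu t) (mu t) \<le> Mm * MA" .
  have "- Ent (mu t) \<le> (\<Sum>i<n. \<Sum>s<m i. 1)"
    unfolding Ent_def sum_negf[symmetric]
  proof (intro sum_mono)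
    fix i s assume i: "i \<in> {..<n}" "s \<in> {..<m i}"
    have "0 < mu t i s" using mu_pos[OF t] c0_pos i by (meson lessThan_iff less_le_trans)
    then show "- (mu t i s * ln (mu t i s)) \<le> 1" by (rule xlnx_bound)
  qed
  also have "\<dots> = Mm" unfolding Mm_def by simp
  finally have e: "- Ent (mu t) \<le> Mm" .
  have "beta / 2 * bil (mu t) (mu t) \<le> beta / 2 * (Mm * MA)" using b bpos by (intro mult_left_mono) auto
  moreover have "0 \<le> KL / (2 * (lam + t + 1)\<^sup>2)" using KL_nonneg by simp
  ultimately show ?thesis unfolding V_def Lf_def using e by linarith
qed

end


lemma subseq_conv:
  fixes X :: "nat \<Rightarrow> 'a \<Rightarrow> real"
  assumes "finite I" and "\<forall>k. \<forall>p\<in>I. \<bar>X k p\<bar> \<le> B"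
  shows "\<exists>r. strict_mono r \<and> (\<forall>p\<in>I. convergent (\<lambda>k. X (r k) p))"
  using assms
proof (induction I rule: finite_induct)
  case empty
  show ?case by (rule exI[of _ id]) (simp add: strict_mono_def)
next
  case (insert p I)
  then obtain r where r: "strict_mono r" "\<forall>q\<in>I. convergent (\<lambda>k. X (r k) q)" by auto
  have "bounded (range (\<lambda>k. X (r k) p))"
    unfolding bounded_iff using insert.prems by (intro exI[of _ B]) auto
  then obtain l r' where r': "strict_mono r'" "((\<lambda>k. X (r k) p) \<circ> r') \<longlonglongrightarrow> l"
    using bounded_imp_convergent_subsequence by blast
  have "strict_mono (r \<circ> r')" using r(1) r'(1) by (rule strict_mono_o)
  moreover have "\<forall>q\<in>insert p I. convergent (\<lambda>k. X ((r \<circ> r') k) q)"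
  proof
    fix q assume q: "q \<in> insert p I"
    show "convergent (\<lambda>k. X ((r \<circ> r') k) q)"
    proof (cases "q = p")
      case True
      then show ?thesis using r'(2) by (auto simp: convergent_def o_def)
    next
      case False
      then have "convergent (\<lambda>k. X (r k) q)" using r(2) q by auto
      from convergent_subseq_convergent[OF this r'(1)] show ?thesis by (simp add: o_def)
    qed
  qed
  ultimately show ?case by blast
qed

lemma sdist_nonneg: "0 \<le> sdist n m x y"
  unfolding sdist_def by (intro real_sqrt_ge_zero sum_nonneg) auto

lemma sinfdist_le: "q \<in> Q \<Longrightarrow> sinfdist n m x Q \<le> sdist n m x q"
  unfolding sinfdist_def by (rule cINF_lower) (auto intro: bdd_belowI[where m=0] sdist_nonneg)

lemma sinfdist_nonneg: "Q \<noteq> {} \<Longrightarrow> 0 \<le> sinfdist n m x Q"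
  unfolding sinfdist_def by (rule cINF_greatest) (auto intro: sdist_nonneg)

context game begin

lemma payoff_tendsto:
  assumes c: "\<And>j s. j < n \<Longrightarrow> s < m j \<Longrightarrow> (\<lambda>k. z k j s) \<longlonglongrightarrow> xs j s"
  shows "(\<lambda>k. payoff n m E A i s (z k)) \<longlonglongrightarrow> payoff n m E A i s xs"
  unfolding payoff_def
  by (intro tendsto_sum tendsto_mult tendsto_const c) (auto dest: nbrs_lt)

lemma logit_tendsto:
  assumes c: "\<And>j s. j < n \<Longrightarrow> s < m j \<Longrightarrow> (\<lambda>k. z k j s) \<longlonglongrightarrow> xs j s" and i: "i < n"
  shows "(\<lambda>k. logit n m E A beta i s (z k)) \<longlonglongrightarrow> logit n m E A beta i s xs"
  unfolding logit_def
  by (intro tendsto_divide tendsto_sum tendsto_exp tendsto_mult tendsto_const payoff_tendsto c)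
     (use denom_pos[OF i, of xs] in auto)

lemma gap_tendsto:
  assumes c: "\<And>j s. j < n \<Longrightarrow> s < m j \<Longrightarrow> (\<lambda>k. z k j s) \<longlonglongrightarrow> xs j s"
  shows "(\<lambda>k. gap (z k)) \<longlonglongrightarrow> gap xs"
  unfolding gap_def
  by (intro tendsto_sum tendsto_power tendsto_diff logit_tendsto c) auto

lemma sdist_tendsto:
  assumes c: "\<And>j s. j < n \<Longrightarrow> s < m j \<Longrightarrow> (\<lambda>k. z k j s) \<longlonglongrightarrow> xs j s"
  shows "(\<lambda>k. sdist n m (z k) xs) \<longlonglongrightarrow> 0"
proof -
  have "(\<lambda>k. sdist n m (z k) xs) \<longlonglongrightarrow> sqrt (\<Sum>i<n. \<Sum>s<m i. (xs i s - xs i s)\<^sup>2)"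
    unfolding sdist_def by (intro tendsto_real_sqrt tendsto_sum tendsto_power tendsto_diff tendsto_const c) auto
  then show ?thesis by simp
qed

lemma gap_local:
  assumes g: "e < gap xs"
  shows "\<exists>\<eta>>0. \<forall>z. (\<forall>i<n. \<forall>s<m i. \<bar>z i s - xs i s\<bar> \<le> \<eta>) \<longrightarrow> e \<le> gap z"
proof (rule ccontr)
  assume "\<not> ?thesis"
  then have "\<forall>k::nat. \<exists>z. (\<forall>i<n. \<forall>s<m i. \<bar>z i s - xs i s\<bar> \<le> inverse (real (Suc k))) \<and> gap z < e"
    by (metis not_le of_nat_0_less_iff positive_imp_inverse_positive zero_less_Suc)
  then obtain z where z: "\<And>k. (\<forall>i<n. \<forall>s<m i. \<bar>z k i s - xs i s\<bar> \<le> inverse (real (Suc k)))" "\<And>k. gap (z k) < e"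
    by metis
  have c: "(\<lambda>k. z k j s) \<longlonglongrightarrow> xs j s" if "j < n" "s < m j" for j s
  proof -
    have "(\<lambda>k. z k j s - xs j s) \<longlonglongrightarrow> 0"
    proof (rule Lim_null_comparison[OF _ LIMSEQ_inverse_real_of_nat])
      show "\<forall>\<^sub>F k in sequentially. norm (z k j s - xs j s) \<le> inverse (real (Suc k))"
        using z(1) that by simp
    qed
    then show ?thesis by (simp add: LIM_zero_iff)
  qed
  have "gap xs \<le> e"
    by (rule LIMSEQ_le_const2[OF gap_tendsto[OF c]]) (use z(2) in \<open>auto intro: less_imp_le\<close>)
  then show False using g by simp
qed

end


context orbit begin

lemma V_deriv_lower: "t1 \<le> t \<Longrightarrow> gap (mu t) / (lam + t + 1) \<le> LD t - (- KL / (lam + t + 1) ^ 3)"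
  using LD_lower[of t] by simp

lemma V_mono: assumes "t1 \<le> u" "u \<le> v" shows "V u \<le> V v"
proof (rule mono_deriv[where g = V and g' = "\<lambda>\<tau>. LD \<tau> - (- KL / (lam + \<tau> + 1) ^ 3)"])
  fix \<tau> assume "u \<le> \<tau>" "\<tau> \<le> v"
  then have t: "t1 \<le> \<tau>" using assms by simp
  show "(V has_real_derivative LD \<tau> - (- KL / (lam + \<tau> + 1) ^ 3)) (at \<tau> within {u..})"
    using dV[OF t] by (rule has_field_derivative_at_within)
  have "0 \<le> gap (mu \<tau>) / (lam + \<tau> + 1)" using gap_nonneg T_pos[of \<tau>] t t1_pos by simp
  then show "0 \<le> LD \<tau> - (- KL / (lam + \<tau> + 1) ^ 3)" using V_deriv_lower[OF t] by linarith
qed (rule assms(2))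

lemma W_mono:
  assumes "t1 \<le> u" "u \<le> v" and g: "\<And>\<tau>. u \<le> \<tau> \<Longrightarrow> \<tau> \<le> v \<Longrightarrow> e \<le> gap (mu \<tau>)"
  shows "V u - e * ln (lam + u + 1) \<le> V v - e * ln (lam + v + 1)"
proof (rule mono_deriv[where g = "\<lambda>\<tau>. V \<tau> - e * ln (lam + \<tau> + 1)"
      and g' = "\<lambda>\<tau>. LD \<tau> - (- KL / (lam + \<tau> + 1) ^ 3) - e * (1 / (lam + \<tau> + 1))"])
  fix \<tau> assume tau: "u \<le> \<tau>" "\<tau> \<le> v"
  then have t: "t1 \<le> \<tau>" using assms by simp
  have T: "0 < lam + \<tau> + 1" using T_pos[of \<tau>] t t1_pos by simp
  show "((\<lambda>\<tau>. V \<tau> - e * ln (lam + \<tau> + 1)) has_real_derivative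
      LD \<tau> - (- KL / (lam + \<tau> + 1) ^ 3) - e * (1 / (lam + \<tau> + 1))) (at \<tau> within {u..})"
    by (intro DERIV_diff DERIV_cmult dlog T has_field_derivative_at_within[OF dV[OF t]])
  have "e / (lam + \<tau> + 1) \<le> gap (mu \<tau>) / (lam + \<tau> + 1)"
    using g[OF tau] T by (intro divide_right_mono) auto
  then show "0 \<le> LD \<tau> - (- KL / (lam + \<tau> + 1) ^ 3) - e * (1 / (lam + \<tau> + 1))"
    using V_deriv_lower[OF t] by simp
qed (rule assms(2))

lemma K1_pos: "0 < K1" unfolding K1_def Bd_def using Cp_nonneg by simp

lemma conv: "((\<lambda>t. sinfdist n m (mu t) (QRE n m E A beta)) \<longlongrightarrow> 0) at_top"
proof (rule ccontr)
  let ?Q = "QRE n m E A beta"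
  assume nc: "\<not> ?thesis"
  then obtain \<epsilon> :: real where ep: "0 < \<epsilon>"
    and ne: "\<not> eventually (\<lambda>t. dist (sinfdist n m (mu t) ?Q) 0 < \<epsilon>) at_top"
    unfolding tendsto_iff by blast
  have "\<forall>N. \<exists>t\<ge>N. \<epsilon> \<le> \<bar>sinfdist n m (mu t) ?Q\<bar>"
    using ne unfolding eventually_at_top_linorder by (auto simp: not_less dist_real_def)
  then have "\<forall>k::nat. \<exists>t. real k + t1 \<le> t \<and> \<epsilon> \<le> \<bar>sinfdist n m (mu t) ?Q\<bar>" by blast
  then obtain a where a: "\<And>k. real k + t1 \<le> a k" "\<And>k. \<epsilon> \<le> \<bar>sinfdist n m (mu (a k)) ?Q\<bar>"
    by metis
  have a0': "\<And>k. t1 \<le> a k"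
  proof -
    fix k have "0 \<le> real k" by simp
    then show "t1 \<le> a k" using a(1)[of k] by linarith
  qed
  have a0: "\<And>k. 0 \<le> a k" "\<And>k. t1 \<le> a k"
  proof -
    fix k show "t1 \<le> a k" by (rule a0')
    then show "0 \<le> a k" using t1_pos by linarith
  qed
  let ?I = "Sigma {..<n} (\<lambda>i. {..<m i})"
  have "\<exists>r. strict_mono r \<and> (\<forall>p\<in>?I. convergent (\<lambda>k. (\<lambda>k p. mu (a k) (fst p) (snd p)) (r k) p))"
    by (rule subseq_conv[where B = Bd]) (auto intro: mu_abs a0)
  then obtain r where r: "strict_mono r"
    and rc: "\<And>i s. i < n \<Longrightarrow> s < m i \<Longrightarrow> convergent (\<lambda>k. mu (a (r k)) i s)" by force
  define y where "y k = mu (a (r k))" for k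
  define xs where "xs i s = lim (\<lambda>k. y k i s)" for i s
  have yc: "\<And>i s. i < n \<Longrightarrow> s < m i \<Longrightarrow> (\<lambda>k. y k i s) \<longlonglongrightarrow> xs i s"
    unfolding xs_def y_def using rc by (simp add: convergent_LIMSEQ_iff)
  have ya: "\<And>k. real k + t1 \<le> a (r k)"
    using a(1) seq_suble[OF r] by (meson add_le_cancel_right of_nat_le_iff order.trans)
  have yk: "\<And>k. t1 \<le> a (r k)" using a0 by simp
  have xs_simp: "xs \<in> prod_simplex n m"
    unfolding prod_simplex_def
  proof (intro CollectI allI impI conjI)
    fix i s assume i: "i < n" and s: "s < m i"
    show "0 \<le> xs i s"
    proof -
      have nn: "\<And>k. 0 \<le> y k i s"
      proof -
        fix k show "0 \<le> y k i s" using mu_pos[OF yk i s, of k] c0_pos unfolding y_def by linarith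
      qed
      show ?thesis using LIMSEQ_le_const[OF yc[OF i s], of 0] nn by blast
    qed
  next
    fix i assume i: "i < n"
    have "(\<lambda>k. \<Sum>s<m i. y k i s) \<longlonglongrightarrow> (\<Sum>s<m i. xs i s)"
      by (intro tendsto_sum yc i) auto
    moreover have "(\<lambda>k. \<Sum>s<m i. y k i s) = (\<lambda>k. 1)"
      unfolding y_def using sum_one a0 i by auto
    ultimately show "(\<Sum>s<m i. xs i s) = 1" using LIMSEQ_unique tendsto_const by metis
  qed
  show False
  proof (cases "gap xs = 0")
    case True
    have "\<forall>i<n. \<forall>s<m i. (logit n m E A beta i s xs - xs i s)\<^sup>2 = 0"
      using True unfolding gap_def
      by (subst (asm) sum_nonneg_eq_0_iff) (auto simp: sum_nonneg_eq_0_iff intro: sum_nonneg)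
    then have xq: "xs \<in> ?Q" unfolding QRE_def using xs_simp by auto
    have "eventually (\<lambda>k. sdist n m (y k) xs < \<epsilon>) sequentially"
      using sdist_tendsto[OF yc] ep by (rule order_tendstoD)
    then obtain k where "sdist n m (y k) xs < \<epsilon>" by (meson eventually_sequentially order.refl)
    moreover have "\<bar>sinfdist n m (y k) ?Q\<bar> \<le> sdist n m (y k) xs"
      using sinfdist_le[OF xq] sinfdist_nonneg[of ?Q] xq by (metis abs_of_nonneg empty_iff)
    moreover have "\<epsilon> \<le> \<bar>sinfdist n m (y k) ?Q\<bar>" unfolding y_def by (rule a(2))
    ultimately show False by simp
  next
    case False
    define e where "e = gap xs / 2"
    have e0: "0 < e" unfolding e_def using False gap_nonneg[of xs] by simp
    have "e < gap xs" unfolding e_def using e0 e_def by linarith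
    from gap_local[OF this] obtain \<eta> where eta: "0 < \<eta>"
      and eg: "\<And>z. (\<forall>i<n. \<forall>s<m i. \<bar>z i s - xs i s\<bar> \<le> \<eta>) \<Longrightarrow> e \<le> gap z" by blast
    define \<delta> where "\<delta> = \<eta> / (2 * K1)"
    have d0: "0 < \<delta>" unfolding \<delta>_def using eta K1_pos by simp
    define G where "G = e * ln (1 + \<delta>)"
    have G0: "0 < G" unfolding G_def using e0 d0 by simp
    define S where "S = (SUP t\<in>{t1..}. V t)"
    have bdd: "bdd_above (V ` {t1..})" using V_upper by (intro bdd_aboveI2) auto
    have "S - G / 2 < S" using G0 by simp
    then obtain t0 where t0: "t1 \<le> t0" "S - G / 2 < V t0"
      unfolding S_def using less_cSUP_iff[OF _ bdd] by force
    have ev1: "eventually (\<lambda>k. \<forall>p\<in>?I. \<bar>y k (fst p) (snd p) - xs (fst p) (snd p)\<bar> < \<eta> / 2) sequentially"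
    proof (rule eventually_ball_finite[where A="?I" and P="\<lambda>k p. \<bar>y k (fst p) (snd p) - xs (fst p) (snd p)\<bar> < \<eta> / 2"])
      show "finite ?I" by (intro finite_SigmaI finite_lessThan)
      show "\<forall>p\<in>?I. eventually (\<lambda>k. \<bar>y k (fst p) (snd p) - xs (fst p) (snd p)\<bar> < \<eta> / 2) sequentially"
      proof
        fix p assume p: "p \<in> ?I"
        then obtain i s where ps: "p = (i, s)" and i: "i < n" and s: "s < m i" by blast
        have h: "0 < \<eta> / 2" using eta by simp
        have "(\<lambda>k. y k i s) \<longlonglongrightarrow> xs i s" by (rule yc[OF i s])
        then have th: "\<forall>\<epsilon>>0. eventually (\<lambda>k. \<bar>y k i s - xs i s\<bar> < \<epsilon>) sequentially"
          unfolding tendsto_iff dist_real_def .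
        from th[rule_format, OF h] ps
        show "eventually (\<lambda>k. \<bar>y k (fst p) (snd p) - xs (fst p) (snd p)\<bar> < \<eta> / 2) sequentially" by simp
      qed
    qed
    have ev2: "eventually (\<lambda>k. t0 \<le> a (r k)) sequentially"
    proof -
      obtain N :: nat where "t0 \<le> real N" using real_arch_simple by blast
      then show ?thesis unfolding eventually_sequentially
        using ya t1_pos by (intro exI[of _ N]) (smt (verit) of_nat_le_iff)
    qed
    from eventually_conj[OF ev1 ev2] obtain N where
      kN: "\<And>k. N \<le> k \<Longrightarrow> (\<forall>p\<in>?I. \<bar>y k (fst p) (snd p) - xs (fst p) (snd p)\<bar> < \<eta> / 2) \<and> t0 \<le> a (r k)"
      unfolding eventually_sequentially by blast
    define k where "k = N"
    have k1: "\<forall>p\<in>?I. \<bar>y k (fst p) (snd p) - xs (fst p) (snd p)\<bar> < \<eta> / 2" and k2: "t0 \<le> a (r k)"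
      using kN[of k] unfolding k_def by auto
    define a1 where "a1 = a (r k)"
    define b1 where "b1 = a1 + \<delta> * (lam + a1 + 1)"
    have a1t: "t1 \<le> a1" "0 \<le> a1" unfolding a1_def using yk a0 by auto
    have Ta: "0 < lam + a1 + 1" using T_pos a1t by simp
    have ab: "a1 \<le> b1" unfolding b1_def using d0 Ta by simp
    have gap_ok: "e \<le> gap (mu \<tau>)" if tau: "a1 \<le> \<tau>" "\<tau> \<le> b1" for \<tau>
    proof (rule eg, intro allI impI)
      fix i s assume i: "i < n" "s < m i"
      have "\<bar>mu \<tau> i s - mu a1 i s\<bar> \<le> K1 * (\<tau> - a1) / (lam + a1 + 1)"
        by (rule mu_lip[OF a1t(2) tau(1) i])
      also have "\<dots> \<le> K1 * (\<delta> * (lam + a1 + 1)) / (lam + a1 + 1)"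
        using tau K1_pos Ta unfolding b1_def by (intro divide_right_mono mult_left_mono) auto
      also have "\<dots> = K1 * \<delta>" using Ta by simp
      also have "\<dots> = \<eta> / 2" unfolding \<delta>_def using K1_pos by simp
      finally have "\<bar>mu \<tau> i s - mu a1 i s\<bar> \<le> \<eta> / 2" .
      moreover have "\<bar>mu a1 i s - xs i s\<bar> < \<eta> / 2" using k1 i unfolding a1_def y_def by auto
      ultimately show "\<bar>mu \<tau> i s - xs i s\<bar> \<le> \<eta>" by linarith
    qed
    have W: "V a1 - e * ln (lam + a1 + 1) \<le> V b1 - e * ln (lam + b1 + 1)"
      by (rule W_mono[OF a1t(1) ab gap_ok])
    have "lam + b1 + 1 = (1 + \<delta>) * (lam + a1 + 1)" unfolding b1_def by (simp add: algebra_simps)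
    then have "ln (lam + b1 + 1) = ln (1 + \<delta>) + ln (lam + a1 + 1)" using d0 Ta by (simp add: ln_mult)
    then have inc: "V a1 + G \<le> V b1" using W unfolding G_def by (simp add: algebra_simps)
    have "V b1 \<le> S" unfolding S_def using a1t ab by (intro cSUP_upper bdd) auto
    moreover have "V t0 \<le> V a1" using V_mono[OF t0(1)] k2 unfolding a1_def by simp
    ultimately show False using inc t0(2) G0 by linarith
  qed
qed

end


lemma homog_hetero:
  "homog_orbit n m E A beta lam mu \<Longrightarrow> hetero_orbit n m E A beta lam (\<lambda>j s. 0) mu"
  unfolding homog_orbit_def hetero_orbit_def by simp

lemma trivial_n0:
  "((\<lambda>t. sinfdist 0 m (mu t) (QRE 0 m E A beta)) \<longlongrightarrow> 0) at_top"
proof -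
  have "QRE 0 m E A beta = UNIV" unfolding QRE_def prod_simplex_def by auto
  moreover have "\<And>x y. sdist 0 m x y = 0" unfolding sdist_def by simp
  ultimately have "\<And>t. sinfdist 0 m (mu t) (QRE 0 m E A beta) = 0"
    unfolding sinfdist_def by simp
  then show ?thesis by simp
qed

theorem theorem5:
  fixes n :: nat and m :: "nat \<Rightarrow> nat" and E :: "nat \<Rightarrow> nat \<Rightarrow> bool"
    and A :: "nat \<Rightarrow> nat \<Rightarrow> nat \<Rightarrow> nat \<Rightarrow> real" and beta lam :: real
  assumes "simple_graph n E"
    and "\<forall>i<n. 0 < m i"
    and "coordination n m E A"
    and "star_forest n E"
    and "beta > 0" and "lam \<ge> 0"
  shows "(\<forall>mu. homog_orbit n m E A beta lam mu \<longrightarrow> mu 0 \<in> prod_simplex n m \<longrightarrow>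
            ((\<lambda>t. sinfdist n m (mu t) (QRE n m E A beta)) \<longlongrightarrow> 0) at_top)
       \<and> (\<forall>sigma2 mu. (\<forall>j<n. \<forall>s<m j. 0 \<le> sigma2 j s) \<longrightarrow>
            hetero_orbit n m E A beta lam sigma2 mu \<longrightarrow> mu 0 \<in> prod_simplex n m \<longrightarrow>
            ((\<lambda>t. sinfdist n m (mu t) (QRE n m E A beta)) \<longlongrightarrow> 0) at_top)"
proof -
  have main: "\<forall>sigma2 mu. (\<forall>j<n. \<forall>s<m j. 0 \<le> sigma2 j s) \<longrightarrow>
            hetero_orbit n m E A beta lam sigma2 mu \<longrightarrow> mu 0 \<in> prod_simplex n m \<longrightarrow>
            ((\<lambda>t. sinfdist n m (mu t) (QRE n m E A beta)) \<longlongrightarrow> 0) at_top"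
  proof (intro allI impI)
    fix sigma2 mu
    assume s: "\<forall>j<n. \<forall>s<m j. 0 \<le> sigma2 j s"
      and h: "hetero_orbit n m E A beta lam sigma2 mu" and i: "mu 0 \<in> prod_simplex n m"
    show "((\<lambda>t. sinfdist n m (mu t) (QRE n m E A beta)) \<longlongrightarrow> 0) at_top"
    proof (cases "n = 0")
      case True
      then show ?thesis using trivial_n0 by simp
    next
      case False
      interpret orbit n m E A beta lam sigma2 mu
        by unfold_locales (use assms s h i False in auto)
      show ?thesis by (rule conv)
    qed
  qed
  moreover have "\<forall>mu. homog_orbit n m E A beta lam mu \<longrightarrow> mu 0 \<in> prod_simplex n m \<longrightarrow>
            ((\<lambda>t. sinfdist n m (mu t) (QRE n m E A beta)) \<longlongrightarrow> 0) at_top"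
    using main homog_hetero by auto
  ultimately show ?thesis by blast
qed

end
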